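(* For every graph $G$ with minimum degree $\delta(G)\ge 2$, $\chi'_{m\Sigma}(G)\le 18$.
   Context: All graphs are simple and finite. A $k$-edge-coloring of $G$ is any map $c:E(G)\to\{1,\dots,k\}$ (adjacent edges may share colors). It induces $\sigma_c(v)=\sum_{u\in N(v)}c(vu)$. The coloring is neighbor sum distinguishing (NSD) if $\sigma_c(u)\ne\sigma_c(v)$ for every edge $uv$. It is majority if every vertex $v$ is incident to at most $d(v)/2$ edges of each single color. $\chi'_{m\Sigma}(G)$ denotes the least $k$ such that $G$ has a $k$-edge-coloring that is both majority and NSD. *)

theory Defs
  imports Main
begin

definition simple_graph :: "'a set \<Rightarrow> ('a \<Rightarrow> 'a \<Rightarrow> bool) \<Rightarrow> bool" where
  "simple_graph V E \<longleftrightarrow> finite V \<and> (\<forall>u v. E u v \<longrightarrow> u \<in> V \<and> v \<in> V)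
     \<and> (\<forall>u v. E u v \<longrightarrow> E v u) \<and> (\<forall>v. \<not> E v v)"

definition nbrs :: "'a set \<Rightarrow> ('a \<Rightarrow> 'a \<Rightarrow> bool) \<Rightarrow> 'a \<Rightarrow> 'a set" where
  "nbrs V E v = {u \<in> V. E v u}"

definition deg :: "'a set \<Rightarrow> ('a \<Rightarrow> 'a \<Rightarrow> bool) \<Rightarrow> 'a \<Rightarrow> nat" where
  "deg V E v = card (nbrs V E v)"

definition edges :: "'a set \<Rightarrow> ('a \<Rightarrow> 'a \<Rightarrow> bool) \<Rightarrow> 'a set set" where
  "edges V E = {{u, v} | u v. u \<in> V \<and> v \<in> V \<and> E u v}"

definition min_degree_ge :: "'a set \<Rightarrow> ('a \<Rightarrow> 'a \<Rightarrow> bool) \<Rightarrow> nat \<Rightarrow> bool" where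
  "min_degree_ge V E d \<longleftrightarrow> (\<forall>v\<in>V. d \<le> deg V E v)"

text \<open>A k-edge-colouring: a map from the edges into {1..k} (adjacent edges may share colours).\<close>
definition edge_coloring :: "'a set \<Rightarrow> ('a \<Rightarrow> 'a \<Rightarrow> bool) \<Rightarrow> nat \<Rightarrow> ('a set \<Rightarrow> nat) \<Rightarrow> bool" where
  "edge_coloring V E k c \<longleftrightarrow> (\<forall>e\<in>edges V E. c e \<in> {1..k})"

definition sigma :: "'a set \<Rightarrow> ('a \<Rightarrow> 'a \<Rightarrow> bool) \<Rightarrow> ('a set \<Rightarrow> nat) \<Rightarrow> 'a \<Rightarrow> nat" where
  "sigma V E c v = (\<Sum>u\<in>nbrs V E v. c {v, u})"

definition nsd :: "'a set \<Rightarrow> ('a \<Rightarrow> 'a \<Rightarrow> bool) \<Rightarrow> ('a set \<Rightarrow> nat) \<Rightarrow> bool" where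
  "nsd V E c \<longleftrightarrow> (\<forall>u\<in>V. \<forall>v\<in>V. E u v \<longrightarrow> sigma V E c u \<noteq> sigma V E c v)"

definition majority :: "'a set \<Rightarrow> ('a \<Rightarrow> 'a \<Rightarrow> bool) \<Rightarrow> ('a set \<Rightarrow> nat) \<Rightarrow> bool" where
  "majority V E c \<longleftrightarrow>
     (\<forall>v\<in>V. \<forall>i. 2 * card {u \<in> nbrs V E v. c {v, u} = i} \<le> deg V E v)"

definition chi_mSigma :: "'a set \<Rightarrow> ('a \<Rightarrow> 'a \<Rightarrow> bool) \<Rightarrow> nat" where
  "chi_mSigma V E = (LEAST k. \<exists>c. edge_coloring V E k c \<and> majority V E c \<and> nsd V E c)"

end

theory Submission
  imports Defs
begin

lemma cnt2:
  fixes B :: "'a set" and z :: "'a \<Rightarrow> int"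
  assumes "finite B" "v1 \<noteq> v2"
  shows "card {j\<in>B. z j = v1} + card {j\<in>B. z j = v2} \<le> card B"
proof -
  have "card {j\<in>B. z j = v1} + card {j\<in>B. z j = v2} = card ({j\<in>B. z j = v1} \<union> {j\<in>B. z j = v2})"
    using assms by (intro card_Un_disjoint[symmetric]) auto
  also have "\<dots> \<le> card B" using assms by (intro card_mono) auto
  finally show ?thesis .
qed

lemma cnt3:
  fixes B :: "'a set" and z :: "'a \<Rightarrow> int"
  assumes "finite B" "v1 \<noteq> v2" "v1 \<noteq> v3" "v2 \<noteq> v3"
  shows "card {j\<in>B. z j = v1} + card {j\<in>B. z j = v2} + card {j\<in>B. z j = v3} \<le> card B"
proof -
  have "card {j\<in>B. z j = v1} + card {j\<in>B. z j = v2} = card ({j\<in>B. z j = v1} \<union> {j\<in>B. z j = v2})"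
    using assms by (intro card_Un_disjoint[symmetric]) auto
  moreover have "card ({j\<in>B. z j = v1} \<union> {j\<in>B. z j = v2}) + card {j\<in>B. z j = v3}
      = card ({j\<in>B. z j = v1} \<union> {j\<in>B. z j = v2} \<union> {j\<in>B. z j = v3})"
    using assms by (intro card_Un_disjoint[symmetric]) auto
  moreover have "card ({j\<in>B. z j = v1} \<union> {j\<in>B. z j = v2} \<union> {j\<in>B. z j = v3}) \<le> card B"
    using assms by (intro card_mono) auto
  ultimately show ?thesis by linarith
qed

lemma cnt1:
  fixes B :: "'a set" and z :: "'a \<Rightarrow> int"
  assumes "finite B"
  shows "card {j\<in>B. z j = v1} \<le> card B"
  using assms by (intro card_mono) auto

lemma exists_m:
  fixes B :: "'a set" and z :: "'a \<Rightarrow> int"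
  assumes fin: "finite B" and b2: "card B \<ge> 2"
  shows "\<exists>m::int. 0 \<le> m \<and> m \<le> int (card B) \<and> int (card {j\<in>B. z j = m}) \<le> m
          \<and> int (card {j\<in>B. z j = m - 1}) + m \<le> int (card B)"
proof (rule ccontr)
  define n where "n = (\<lambda>v. int (card {j\<in>B. z j = v}))"
  define b where "b = int (card B)"
  assume "\<not> ?thesis"
  note nt = this
  have fails: "n m \<ge> m + 1 \<or> n (m - 1) \<ge> b - m + 1" if "0 \<le> m" "m \<le> b" for m
  proof -
    have "\<not> (n m \<le> m \<and> n (m-1) + m \<le> b)" using nt that unfolding n_def b_def by blast
    thus ?thesis by linarith
  qed
  have nb: "\<And>v. n v \<le> b" unfolding n_def b_def using cnt1[OF fin] by simp
  have n2: "\<And>v1 v2. v1 \<noteq> v2 \<Longrightarrow> n v1 + n v2 \<le> b"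
  proof -
    fix v1 v2 :: int assume "v1 \<noteq> v2"
    from cnt2[OF fin this, of z] have "card {j\<in>B. z j = v1} + card {j\<in>B. z j = v2} \<le> card B" .
    then show "n v1 + n v2 \<le> b" unfolding n_def b_def by (simp only: of_nat_add[symmetric] of_nat_le_iff)
  qed
  have n3: "\<And>v1 v2 v3. v1 \<noteq> v2 \<Longrightarrow> v1 \<noteq> v3 \<Longrightarrow> v2 \<noteq> v3 \<Longrightarrow> n v1 + n v2 + n v3 \<le> b"
  proof -
    fix v1 v2 v3 :: int assume "v1 \<noteq> v2" "v1 \<noteq> v3" "v2 \<noteq> v3"
    from cnt3[OF fin this, of z] have "card {j\<in>B. z j = v1} + card {j\<in>B. z j = v2} + card {j\<in>B. z j = v3} \<le> card B" .
    then show "n v1 + n v2 + n v3 \<le> b" unfolding n_def b_def by (simp only: of_nat_add[symmetric] of_nat_le_iff)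
  qed
  have bge: "b \<ge> 2" using b2 unfolding b_def by simp
  define Tm where "Tm = {m. 0 \<le> m \<and> m \<le> b \<and> n m \<ge> m + 1}"
  have n0: "n 0 \<ge> 1" using fails[of 0] nb[of "-1"] bge by auto
  have finT: "finite Tm" unfolding Tm_def by (rule finite_subset[of _ "{0..b}"]) auto
  have T0: "0 \<in> Tm" unfolding Tm_def using n0 bge by auto
  define m0 where "m0 = Max Tm"
  have m0T: "m0 \<in> Tm" unfolding m0_def using finT T0 Max_in by blast
  have m0max: "\<And>m. m \<in> Tm \<Longrightarrow> m \<le> m0" unfolding m0_def using finT by simp
  have m0ge: "0 \<le> m0" using m0max[OF T0] .
  have nm0: "n m0 \<ge> m0 + 1" using m0T unfolding Tm_def by auto
  have m0lt: "m0 \<le> b - 1" using nm0 nb[of m0] by linarith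
  have notT: "n m < m + 1" if "m0 < m" "m \<le> b" for m
  proof (rule ccontr)
    assume "\<not> n m < m + 1"
    hence "m \<in> Tm" unfolding Tm_def using that m0ge by auto
    thus False using m0max that by fastforce
  qed
  have a1: "n m0 \<ge> b - m0"
    using fails[of "m0+1"] notT[of "m0+1"] m0ge m0lt by auto
  show False
  proof (cases "m0 = 0")
    case True
    have "n 1 \<ge> b - 1" using fails[of 2] notT[of 2] True bge by auto
    then show ?thesis using n2[of 0 1] a1 True bge by auto
  next
    case False
    show ?thesis
    proof (cases "m0 = b - 1")
      case True
      then show ?thesis using n2[of 0 m0] n0 nm0 False m0ge by auto
    next
      case False2: False
      have "n (m0 + 2 - 1) \<ge> b - (m0 + 2) + 1" using fails[of "m0+2"] notT[of "m0+2"] m0ge m0lt False2 by auto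
      hence "n (m0 + 1) \<ge> b - m0 - 1" by (simp add: algebra_simps)
      then show ?thesis using n3[of 0 m0 "m0+1"] n0 nm0 False m0ge by auto
    qed
  qed
qed


lemma core_root:
  fixes B :: "'a set" and z :: "'a \<Rightarrow> int"
  assumes fin: "finite B" and b2: "card B \<ge> 2"
  shows "\<exists>Y\<subseteq>B. \<forall>j\<in>B. int (card (Y - {j})) \<noteq> z j"
proof -
  obtain m :: int where m0: "0 \<le> m" and mb: "m \<le> int (card B)"
    and h1: "int (card {j\<in>B. z j = m}) \<le> m"
    and h2: "int (card {j\<in>B. z j = m - 1}) + m \<le> int (card B)"
    using exists_m[OF fin b2, of z] by blast
  define Bm where "Bm = {j\<in>B. z j = m}"
  define Bm1 where "Bm1 = {j\<in>B. z j = m - 1}"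
  define C where "C = {j\<in>B. z j \<noteq> m \<and> z j \<noteq> m - 1}"
  have finC: "finite C" "finite Bm" "finite Bm1" using fin unfolding C_def Bm_def Bm1_def by auto
  have Bsplit: "B = Bm \<union> Bm1 \<union> C" unfolding Bm_def Bm1_def C_def by auto
  have "card B = card Bm + card Bm1 + card C"
  proof -
    have "card (Bm \<union> Bm1) = card Bm + card Bm1" using finC by (intro card_Un_disjoint) (auto simp: Bm_def Bm1_def)
    moreover have "card (Bm \<union> Bm1 \<union> C) = card (Bm \<union> Bm1) + card C"
      using finC by (intro card_Un_disjoint) (auto simp: Bm_def Bm1_def C_def)
    ultimately show ?thesis using Bsplit by simp
  qed
  hence cC: "int (card C) \<ge> m - int (card Bm)" using h2 unfolding Bm1_def by linarith
  define k where "k = nat (m - int (card Bm))"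
  have "k \<le> card C" using cC h1 unfolding k_def Bm_def by linarith
  then obtain D where D: "D \<subseteq> C" "card D = k" using obtain_subset_with_card_n by metis
  define Y where "Y = Bm \<union> D"
  have finD: "finite D" using D finC finite_subset by blast
  have cY: "int (card Y) = m"
  proof -
    have "card Y = card Bm + card D" unfolding Y_def using finD finC D
      by (intro card_Un_disjoint) (auto simp: Bm_def C_def)
    thus ?thesis using D h1 unfolding k_def Bm_def by simp
  qed
  have YB: "Y \<subseteq> B" unfolding Y_def using D unfolding Bm_def C_def by auto
  have finY: "finite Y" using YB fin finite_subset by blast
  have "\<forall>j\<in>B. int (card (Y - {j})) \<noteq> z j"
  proof
    fix j assume jB: "j \<in> B"
    show "int (card (Y - {j})) \<noteq> z j"
    proof (cases "j \<in> Y")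
      case True
      have c1: "card (Y - {j}) = card Y - 1" using True finY by (simp add: card_Diff_singleton)
      have "card Y \<noteq> 0" using True finY by (simp add: card_eq_0_iff) (use True in blast)
      hence "int (card (Y - {j})) = int (card Y) - 1" using c1 by (simp add: of_nat_diff)
      have "int (card (Y - {j})) = m - 1" using cY \<open>int (card (Y - {j})) = int (card Y) - 1\<close> by simp
      moreover have "z j \<noteq> m - 1" using True D unfolding Y_def Bm_def C_def by auto
      ultimately show ?thesis by simp
    next
      case False
      hence "int (card (Y - {j})) = m" using cY by simp
      moreover have "z j \<noteq> m" using False jB unfolding Y_def Bm_def by auto
      ultimately show ?thesis by simp
    qed
  qed
  thus ?thesis using YB by blast
qed


lemma card_split_diff:
  assumes "finite A" "A \<subseteq> L \<union> H" "L \<inter> H = {}"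
  shows "card (A - {j}) = card ((A \<inter> L) - {j}) + card ((A \<inter> H) - {j})"
proof -
  have "A - {j} = ((A \<inter> L) - {j}) \<union> ((A \<inter> H) - {j})" using assms by auto
  moreover have "card (((A \<inter> L) - {j}) \<union> ((A \<inter> H) - {j})) = card ((A \<inter> L) - {j}) + card ((A \<inter> H) - {j})"
    using assms by (intro card_Un_disjoint) auto
  ultimately show ?thesis by simp
qed

lemma root_choice:
  fixes B :: "'a set" and eps :: "'a \<Rightarrow> int" and sj :: "'a \<Rightarrow> int" and sr :: int
  assumes fin: "finite B" and b2: "card B \<ge> 2" and eps: "\<forall>k\<in>B. eps k = 1 \<or> eps k = -1"
  shows "\<exists>Y\<subseteq>B. \<forall>j\<in>B. sr + 6 * (\<Sum>k\<in>Y. eps k) \<noteq> sj j + 6 * (if j \<in> Y then eps j else 0)"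
proof -
  define Lw where "Lw = {k\<in>B. eps k = 1}"
  define Hi where "Hi = {k\<in>B. eps k = -1}"
  have BLH: "B = Lw \<union> Hi" "Lw \<inter> Hi = {}" using eps unfolding Lw_def Hi_def by auto
  have finLH: "finite Lw" "finite Hi" using fin unfolding Lw_def Hi_def by auto
  define z where "z j = (if 6 dvd (sj j - sr) then (sj j - sr) div 6 + int (card (Hi - {j})) else -1)" for j
  obtain Y' where Y'B: "Y' \<subseteq> B" and Y'z: "\<forall>j\<in>B. int (card (Y' - {j})) \<noteq> z j"
    using core_root[OF fin b2, of z] by blast
  define Y where "Y = (Y' \<inter> Lw) \<union> (Hi - Y')"
  have YB: "Y \<subseteq> B" unfolding Y_def using BLH by auto
  have finY': "finite Y'" using Y'B fin finite_subset by blast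
  have key: "(\<Sum>k\<in>Y - {j}. eps k) = int (card (Y' - {j})) - int (card (Hi - {j}))" for j
  proof -
    have e1: "(\<Sum>k\<in>Y - {j}. eps k) = (\<Sum>k\<in>(Y' \<inter> Lw) - {j}. eps k) + (\<Sum>k\<in>(Hi - Y') - {j}. eps k)"
    proof -
      have "Y - {j} = ((Y' \<inter> Lw) - {j}) \<union> ((Hi - Y') - {j})" unfolding Y_def by auto
      moreover have "(\<Sum>k\<in>((Y' \<inter> Lw) - {j}) \<union> ((Hi - Y') - {j}). eps k) = (\<Sum>k\<in>(Y' \<inter> Lw) - {j}. eps k) + (\<Sum>k\<in>(Hi - Y') - {j}. eps k)"
        using finLH BLH by (intro sum.union_disjoint) auto
      ultimately show ?thesis by simp
    qed
    have e2: "(\<Sum>k\<in>(Y' \<inter> Lw) - {j}. eps k) = int (card ((Y' \<inter> Lw) - {j}))"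
      by (subst sum.cong[where h="\<lambda>_. 1"]) (auto simp: Lw_def)
    have e3: "(\<Sum>k\<in>(Hi - Y') - {j}. eps k) = - int (card ((Hi - Y') - {j}))"
      by (subst sum.cong[where h="\<lambda>_. -1"]) (auto simp: Hi_def)
    have e4: "card (Y' - {j}) = card ((Y' \<inter> Lw) - {j}) + card ((Y' \<inter> Hi) - {j})"
      using card_split_diff[OF finY' _ BLH(2)] Y'B BLH(1) by blast
    have e5: "card (Hi - {j}) = card ((Hi \<inter> Y') - {j}) + card ((Hi \<inter> (B - Y')) - {j})"
      using card_split_diff[of Hi Y' "B - Y'" j] finLH BLH by auto
    have e6: "(Hi \<inter> (B - Y')) = Hi - Y'" "Hi \<inter> Y' = Y' \<inter> Hi" using BLH by auto
    show ?thesis using e1 e2 e3 e4 e5 e6 by simp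
  qed
  have "\<forall>j\<in>B. sr + 6 * (\<Sum>k\<in>Y. eps k) \<noteq> sj j + 6 * (if j \<in> Y then eps j else 0)"
  proof (intro ballI notI)
    fix j assume jB: "j \<in> B" and eq: "sr + 6 * (\<Sum>k\<in>Y. eps k) = sj j + 6 * (if j \<in> Y then eps j else 0)"
    have finY: "finite Y" using YB fin finite_subset by blast
    have "(\<Sum>k\<in>Y. eps k) = (\<Sum>k\<in>Y - {j}. eps k) + (if j \<in> Y then eps j else 0)"
      using finY by (cases "j \<in> Y") (simp_all add: sum.remove)
    hence "sj j - sr = 6 * (int (card (Y' - {j})) - int (card (Hi - {j})))" using eq key[of j] by simp
    hence "z j = int (card (Y' - {j}))" unfolding z_def by simp
    thus False using Y'z jB by fastforce
  qed
  thus ?thesis using YB by blast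
qed

lemma window_sum:
  fixes B :: "'a set" and eps :: "'a \<Rightarrow> int"
  assumes fin: "finite B" and eps: "\<forall>k\<in>B. eps k = 1 \<or> eps k = -1"
    and T1: "- int (card {k\<in>B. eps k = -1}) \<le> T" and T2: "T \<le> int (card {k\<in>B. eps k = 1})"
  shows "\<exists>Y\<subseteq>B. (\<Sum>k\<in>Y. eps k) = T"
proof (cases "T \<ge> 0")
  case True
  obtain Y where Y: "Y \<subseteq> {k\<in>B. eps k = 1}" "card Y = nat T"
    using obtain_subset_with_card_n[of "nat T" "{k\<in>B. eps k = 1}"] T2 True by force
  have "(\<Sum>k\<in>Y. eps k) = (\<Sum>k\<in>Y. 1)" using Y by (intro sum.cong) auto
  hence "(\<Sum>k\<in>Y. eps k) = T" using Y True by simp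
  thus ?thesis using Y by blast
next
  case False
  obtain Y where Y: "Y \<subseteq> {k\<in>B. eps k = -1}" "card Y = nat (-T)"
    using obtain_subset_with_card_n[of "nat (-T)" "{k\<in>B. eps k = -1}"] T1 False by force
  have "(\<Sum>k\<in>Y. eps k) = (\<Sum>k\<in>Y. -1)" using Y by (intro sum.cong) auto
  hence "(\<Sum>k\<in>Y. eps k) = T" using Y False by simp
  thus ?thesis using Y by blast
qed

lemma card_LH:
  fixes B :: "'a set" and eps :: "'a \<Rightarrow> int"
  assumes fin: "finite B" and eps: "\<forall>k\<in>B. eps k = 1 \<or> eps k = -1"
  shows "card {k\<in>B. eps k = -1} + card {k\<in>B. eps k = 1} = card B"
proof -
  have "B = {k\<in>B. eps k = -1} \<union> {k\<in>B. eps k = 1}" using eps by auto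
  moreover have "card ({k\<in>B. eps k = -1} \<union> {k\<in>B. eps k = 1}) = card {k\<in>B. eps k = -1} + card {k\<in>B. eps k = 1}"
    using fin by (intro card_Un_disjoint) auto
  ultimately show ?thesis by simp
qed

lemma choose_alpha:
  fixes B :: "'a set" and lo :: "'a \<Rightarrow> int" and beta :: int and F :: "nat set"
  assumes fin: "finite B" and finF: "finite F"
    and cF: "card F \<le> 3 \<or> (card F \<le> 4 \<and> card B \<le> 2)"
  shows "\<exists>\<alpha>\<in>{1..6::nat}. \<alpha> \<notin> F \<and>
    (3 * card {j\<in>B. (lo j - beta - int \<alpha>) mod 6 = 0} \<le> card B \<or>
     (card {j\<in>B. (lo j - beta - int \<alpha>) mod 6 = 0} = 1 \<and> card B \<ge> 2))"
proof -
  define A where "A = {1..6::nat} - F"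
  define Bs where "Bs \<alpha> = {j\<in>B. (lo j - beta - int \<alpha>) mod 6 = 0}" for \<alpha> :: nat
  have cA: "card A \<ge> 6 - card F" unfolding A_def
    using diff_card_le_card_Diff[OF finF, of "{1..6::nat}"] by simp
  have finA: "finite A" unfolding A_def by simp
  have disj: "Bs a1 \<inter> Bs a2 = {}" if "a1 \<in> A" "a2 \<in> A" "a1 \<noteq> a2" for a1 a2
  proof (rule ccontr)
    assume "Bs a1 \<inter> Bs a2 \<noteq> {}"
    then obtain j where "j \<in> Bs a1" "j \<in> Bs a2" by blast
    hence "(6::int) dvd (lo j - beta - int a1)" "(6::int) dvd (lo j - beta - int a2)"
      unfolding Bs_def by (simp_all add: mod_eq_0_iff_dvd)
    hence "(6::int) dvd ((lo j - beta - int a1) - (lo j - beta - int a2))" by (rule dvd_diff)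
    hence "(6::int) dvd (int a2 - int a1)" by simp
    then obtain k where k: "int a2 - int a1 = 6 * k" by (auto simp: dvd_def)
    moreover have "a1 \<in> {1..6}" "a2 \<in> {1..6}" using that unfolding A_def by auto
    ultimately have "int a2 - int a1 = 0" by auto
    thus False using that(3) by simp
  qed
  have sumle: "(\<Sum>\<alpha>\<in>A. card (Bs \<alpha>)) \<le> card B"
  proof -
    have "(\<Sum>\<alpha>\<in>A. card (Bs \<alpha>)) = card (\<Union>\<alpha>\<in>A. Bs \<alpha>)"
      using finA fin disj by (intro card_UN_disjoint[symmetric]) (auto simp: Bs_def)
    also have "\<dots> \<le> card B" using fin by (intro card_mono) (auto simp: Bs_def)
    finally show ?thesis .
  qed
  have "\<exists>\<alpha>\<in>A. 3 * card (Bs \<alpha>) \<le> card B \<or> (card (Bs \<alpha>) = 1 \<and> card B \<ge> 2)"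
  proof (cases "card F \<le> 3")
    case True
    hence cA3: "card A \<ge> 3" using cA by linarith
    show ?thesis
    proof (rule ccontr)
      assume "\<not> ?thesis"
      hence h: "\<forall>\<alpha>\<in>A. card B + 1 \<le> 3 * card (Bs \<alpha>)" by auto
      have "(\<Sum>\<alpha>\<in>A. card B + 1) \<le> (\<Sum>\<alpha>\<in>A. 3 * card (Bs \<alpha>))" using h by (intro sum_mono) auto
      hence "card A * (card B + 1) \<le> 3 * (\<Sum>\<alpha>\<in>A. card (Bs \<alpha>))" by (simp add: sum_distrib_left)
      moreover have "3 * (card B + 1) \<le> card A * (card B + 1)" using cA3 by (intro mult_right_mono) auto
      ultimately have "3 * (card B + 1) \<le> 3 * (\<Sum>\<alpha>\<in>A. card (Bs \<alpha>))" by (rule le_trans[rotated])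
      hence "card B + 1 \<le> (\<Sum>\<alpha>\<in>A. card (Bs \<alpha>))" by simp
      thus False using sumle by simp
    qed
  next
    case False
    hence cB: "card B \<le> 2" and cA2: "card A \<ge> 2" using cF cA by auto
    then obtain a1 a2 where a: "a1 \<in> A" "a2 \<in> A" "a1 \<noteq> a2"
      by (metis One_nat_def card_le_Suc0_iff_eq finA not_less_eq_eq numeral_2_eq_2)
    have "card (Bs a1) + card (Bs a2) \<le> card B"
    proof -
      have "card (Bs a1) + card (Bs a2) = (\<Sum>\<alpha>\<in>{a1,a2}. card (Bs \<alpha>))" using a by simp
      also have "\<dots> \<le> (\<Sum>\<alpha>\<in>A. card (Bs \<alpha>))" using a finA by (intro sum_mono2) auto
      finally show ?thesis using sumle by linarith
    qed
    then show ?thesis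
    proof (cases "card (Bs a1) = 0")
      case True
      thus ?thesis using a(1) by force
    next
      case False
      show ?thesis
      proof (cases "card (Bs a2) = 0")
        case True
        thus ?thesis using a(2) by force
      next
        case False2: False
        have "card (Bs a1) = 1 \<and> card B \<ge> 2" using False False2 \<open>card (Bs a1) + card (Bs a2) \<le> card B\<close> cB by linarith
        thus ?thesis using a(1) by blast
      qed
    qed
  qed
  thus ?thesis unfolding A_def Bs_def by auto
qed


lemma nonroot_choice:
  fixes B :: "'a set" and eps lo :: "'a \<Rightarrow> int" and beta :: int and F :: "nat set"
  assumes fin: "finite B" and eps: "\<forall>k\<in>B. eps k = 1 \<or> eps k = -1" and finF: "finite F"
    and cF: "card F \<le> 3 \<or> (card F \<le> 4 \<and> card B \<le> 2)"
  shows "\<exists>\<alpha> Y L. \<alpha> \<in> {1..6} \<and> \<alpha> \<notin> F \<and> Y \<subseteq> B \<and>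
     (L = beta + int \<alpha> + 6 * (\<Sum>k\<in>Y. eps k) \<or> L + 6 = beta + int \<alpha> + 6 * (\<Sum>k\<in>Y. eps k)) \<and>
     (\<forall>j\<in>B. L - lo j \<noteq> -6 \<and> L - lo j \<noteq> 0 \<and> L - lo j \<noteq> 6)"
proof -
  obtain \<alpha> where a16: "\<alpha> \<in> {1..6::nat}" and aF: "\<alpha> \<notin> F" and
    ca: "3 * card {j\<in>B. (lo j - beta - int \<alpha>) mod 6 = 0} \<le> card B \<or>
     (card {j\<in>B. (lo j - beta - int \<alpha>) mod 6 = 0} = 1 \<and> card B \<ge> 2)"
    using choose_alpha[OF fin finF cF, of lo beta] by blast
  define Ba where "Ba = {j\<in>B. (lo j - beta - int \<alpha>) mod 6 = 0}"
  define nH where "nH = int (card {k\<in>B. eps k = -1})"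
  define nL where "nL = int (card {k\<in>B. eps k = 1})"
  have nHL: "nH + nL = int (card B)" unfolding nH_def nL_def using card_LH[OF fin eps] by simp
  define q where "q j = (lo j - beta - int \<alpha>) div 6" for j
  have qj: "lo j = beta + int \<alpha> + 6 * q j" if "j \<in> Ba" for j
    using that unfolding Ba_def q_def by auto
  have other: "L - lo j \<noteq> -6 \<and> L - lo j \<noteq> 0 \<and> L - lo j \<noteq> 6"
    if "j \<in> B" "j \<notin> Ba" "L = beta + int \<alpha> + 6 * T" for j L T
  proof -
    have "(lo j - beta - int \<alpha>) mod 6 \<noteq> 0" using that unfolding Ba_def by auto
    moreover have "(lo j - beta - int \<alpha>) = (lo j - L) + 6 * T" using that(3) by simp
    ultimately have "(lo j - L) mod 6 \<noteq> 0" by (metis mod_mult_self2)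
    hence "lo j - L \<noteq> 6" "lo j - L \<noteq> -6" "lo j - L \<noteq> 0" by auto
    thus ?thesis by linarith
  qed
  have winY: "\<exists>Y\<subseteq>B. (\<Sum>k\<in>Y. eps k) = T" if "- nH \<le> T" "T \<le> nL" for T
    using window_sum[OF fin eps] that unfolding nH_def nL_def by blast
  show ?thesis
  proof (cases "3 * card Ba \<le> card B")
    case True
    define Bad where "Bad = (\<lambda>(j, d). q j + d) ` (Ba \<times> {-1, 0, 1::int})"
    have finBa: "finite Ba" using fin unfolding Ba_def by simp
    have cBad: "card Bad \<le> 3 * card Ba"
    proof -
      have "card Bad \<le> card (Ba \<times> {-1, 0, 1::int})" unfolding Bad_def by (rule card_image_le) (use finBa in simp)
      also have "\<dots> = card Ba * 3" by (simp add: card_cartesian_product)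
      finally show ?thesis by simp
    qed
    have "\<not> {-nH..nL} \<subseteq> Bad"
    proof
      assume "{-nH..nL} \<subseteq> Bad"
      hence "card {-nH..nL} \<le> card Bad" using finBa unfolding Bad_def by (intro card_mono) auto
      moreover have "card {-nH..nL} = card B + 1" using nHL by simp
      ultimately show False using cBad True by linarith
    qed
    then obtain T where T: "-nH \<le> T" "T \<le> nL" "T \<notin> Bad" by (meson atLeastAtMost_iff subsetI)
    obtain Y where Y: "Y \<subseteq> B" "(\<Sum>k\<in>Y. eps k) = T" using winY[OF T(1,2)] by blast
    define L where "L = beta + int \<alpha> + 6 * T"
    have "\<forall>j\<in>B. L - lo j \<noteq> -6 \<and> L - lo j \<noteq> 0 \<and> L - lo j \<noteq> 6"
    proof
      fix j assume jB: "j \<in> B"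
      show "L - lo j \<noteq> -6 \<and> L - lo j \<noteq> 0 \<and> L - lo j \<noteq> 6"
      proof (cases "j \<in> Ba")
        case True
        have "q j - 1 \<in> Bad" "q j + 0 \<in> Bad" "q j + 1 \<in> Bad" unfolding Bad_def using True by force+
        hence "T \<noteq> q j - 1" "T \<noteq> q j" "T \<noteq> q j + 1" using T(3) by auto
        thus ?thesis unfolding L_def using qj[OF True] by auto
      next
        case False
        thus ?thesis using other[OF jB False] L_def by blast
      qed
    qed
    moreover have "L = beta + int \<alpha> + 6 * (\<Sum>k\<in>Y. eps k)" using Y L_def by simp
    ultimately show ?thesis using a16 aF Y(1) by blast
  next
    case False
    hence c1: "card Ba = 1" and cB2: "card B \<ge> 2" using ca unfolding Ba_def by auto
    then obtain j0 where Ba0: "Ba = {j0}" using card_1_singletonE by blast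
    define L0 where "L0 = - nH"
    show ?thesis
    proof (cases "L0 - 1 - q j0 \<noteq> -1 \<and> L0 - 1 - q j0 \<noteq> 0 \<and> L0 - 1 - q j0 \<noteq> 1")
      case True
      obtain Y where Y: "Y \<subseteq> B" "(\<Sum>k\<in>Y. eps k) = L0" using winY[of L0] nHL cB2 unfolding L0_def by force
      define L where "L = beta + int \<alpha> + 6 * (L0 - 1)"
      have "\<forall>j\<in>B. L - lo j \<noteq> -6 \<and> L - lo j \<noteq> 0 \<and> L - lo j \<noteq> 6"
      proof
        fix j assume jB: "j \<in> B"
        show "L - lo j \<noteq> -6 \<and> L - lo j \<noteq> 0 \<and> L - lo j \<noteq> 6"
        proof (cases "j \<in> Ba")
          case True
          hence "j = j0" using Ba0 by simp
          thus ?thesis unfolding L_def using qj[OF True] \<open>L0 - 1 - q j0 \<noteq> -1 \<and> _\<close> by auto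
        next
          case False
          thus ?thesis using other[OF jB False, of L "L0 - 1"] L_def by blast
        qed
      qed
      moreover have "L + 6 = beta + int \<alpha> + 6 * (\<Sum>k\<in>Y. eps k)" using Y L_def by simp
      ultimately show ?thesis using a16 aF Y by blast
    next
      case False
      obtain Y where Y: "Y \<subseteq> B" "(\<Sum>k\<in>Y. eps k) = L0 + 2" using winY[of "L0 + 2"] nHL cB2 unfolding L0_def by force
      define L where "L = beta + int \<alpha> + 6 * (L0 + 2)"
      have "\<forall>j\<in>B. L - lo j \<noteq> -6 \<and> L - lo j \<noteq> 0 \<and> L - lo j \<noteq> 6"
      proof
        fix j assume jB: "j \<in> B"
        show "L - lo j \<noteq> -6 \<and> L - lo j \<noteq> 0 \<and> L - lo j \<noteq> 6"
        proof (cases "j \<in> Ba")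
          case True
          hence "j = j0" using Ba0 by simp
          thus ?thesis unfolding L_def using qj[OF True] False by auto
        next
          case False
          thus ?thesis using other[OF jB False, of L "L0 + 2"] L_def by blast
        qed
      qed
      moreover have "L = beta + int \<alpha> + 6 * (\<Sum>k\<in>Y. eps k)" using Y L_def by simp
      ultimately show ?thesis using a16 aF Y(1) by blast
    qed
  qed
qed

definition Pl :: "'a set \<Rightarrow> ('a \<Rightarrow> 'a \<Rightarrow> bool) \<Rightarrow> 'a list \<Rightarrow> bool" where
  "Pl V E L \<longleftrightarrow> (\<forall>i<length L. (\<exists>l<i. E (L!i) (L!l)) \<or>
       (\<forall>x\<in>V - set (take i L). \<forall>y\<in>set (take i L). \<not> E x y))"

lemma list_exists:
  assumes fin: "finite V"
  shows "k \<le> card V \<Longrightarrow> \<exists>L. length L = k \<and> distinct L \<and> set L \<subseteq> V \<and> Pl V E L"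
proof (induction k)
  case 0
  then show ?case by (auto simp: Pl_def)
next
  case (Suc k)
  then obtain L where L: "length L = k" "distinct L" "set L \<subseteq> V" "Pl V E L" by auto
  have "card (set L) = k" using L distinct_card by blast
  have "V - set L \<noteq> {}"
  proof
    assume "V - set L = {}"
    hence "V \<subseteq> set L" by blast
    hence "card V \<le> card (set L)" by (intro card_mono) auto
    thus False using \<open>card (set L) = k\<close> Suc.prems by simp
  qed
  show ?case
  proof (cases "\<exists>x\<in>V - set L. \<exists>y\<in>set L. E x y")
    case True
    then obtain x y where xy: "x \<in> V - set L" "y \<in> set L" "E x y" by blast
    obtain l where l: "l < length L" "L ! l = y" using xy(2) by (meson in_set_conv_nth)
    define L' where "L' = L @ [x]"
    have "Pl V E L'"
      unfolding Pl_def
    proof (intro allI impI)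
      fix i assume i: "i < length L'"
      show "(\<exists>l<i. E (L' ! i) (L' ! l)) \<or> (\<forall>x\<in>V - set (take i L'). \<forall>y\<in>set (take i L'). \<not> E x y)"
      proof (cases "i < length L")
        case True
        hence "L' ! i = L ! i" "take i L' = take i L" "\<And>l. l < i \<Longrightarrow> L' ! l = L ! l"
          unfolding L'_def by (auto simp: nth_append)
        thus ?thesis using L(4) True unfolding Pl_def by metis
      next
        case False
        hence "i = length L" using i unfolding L'_def by simp
        hence "L' ! i = x" "L' ! l = y" "l < i" using l unfolding L'_def by (auto simp: nth_append)
        thus ?thesis using xy(3) by blast
      qed
    qed
    thus ?thesis using L xy unfolding L'_def by (intro exI[of _ "L @ [x]"]) auto
  next
    case False
    obtain x where x: "x \<in> V - set L" using \<open>V - set L \<noteq> {}\<close> by blast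
    define L' where "L' = L @ [x]"
    have "Pl V E L'"
      unfolding Pl_def
    proof (intro allI impI)
      fix i assume i: "i < length L'"
      show "(\<exists>l<i. E (L' ! i) (L' ! l)) \<or> (\<forall>x\<in>V - set (take i L'). \<forall>y\<in>set (take i L'). \<not> E x y)"
      proof (cases "i < length L")
        case True
        hence "L' ! i = L ! i" "take i L' = take i L" "\<And>l. l < i \<Longrightarrow> L' ! l = L ! l"
          unfolding L'_def by (auto simp: nth_append)
        thus ?thesis using L(4) True unfolding Pl_def by metis
      next
        case False
        hence "i = length L" using i unfolding L'_def by simp
        hence "take i L' = L" unfolding L'_def by simp
        thus ?thesis using False by (metis \<open>\<not> (\<exists>x\<in>V - set L. \<exists>y\<in>set L. E x y)\<close>)
      qed
    qed
    thus ?thesis using L x unfolding L'_def by (intro exI[of _ "L @ [x]"]) auto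
  qed
qed

lemma order_exists:
  assumes fin: "finite V"
  shows "\<exists>ord. inj_on ord V \<and> ord ` V = {0..<card V} \<and>
    (\<forall>v\<in>V. (\<exists>u\<in>V. E v u \<and> ord u > ord v) \<or> (\<forall>j\<in>V. E v j \<longrightarrow> (\<forall>u\<in>V. E j u \<longrightarrow> ord u \<le> ord v)))"
proof -
  define n where "n = card V"
  obtain L where L: "length L = n" "distinct L" "set L \<subseteq> V" "Pl V E L"
    using list_exists[OF fin, of n E] unfolding n_def by auto
  have setL: "set L = V" using L fin unfolding n_def by (metis card_subset_eq distinct_card)
  have bij: "bij_betw ((!) L) {..<n} V" using bij_betw_nth[OF L(2)] L(1) setL by simp
  define h where "h = inv_into {..<n} ((!) L)"
  have bh: "bij_betw h V {..<n}" unfolding h_def using bij by (rule bij_betw_inv_into)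
  have hL: "L ! (h v) = v" if "v \<in> V" for v
    unfolding h_def using bij that by (meson bij_betw_inv_into_right)
  have Lh: "h (L ! i) = i" if "i < n" for i
    unfolding h_def using bij that by (simp add: bij_betw_inv_into_left)
  define ord where "ord v = n - 1 - h v" for v
  have hlt: "h v < n" if "v \<in> V" for v using bh that by (meson bij_betwE lessThan_iff)
  have inj: "inj_on ord V"
  proof (rule inj_onI)
    fix v w assume "v \<in> V" "w \<in> V" "ord v = ord w"
    hence "n - 1 - h v = n - 1 - h w" unfolding ord_def by simp
    moreover have "h v < n" "h w < n" using hlt \<open>v \<in> V\<close> \<open>w \<in> V\<close> by auto
    ultimately have "h v = h w" by arith
    thus "v = w" using hL \<open>v \<in> V\<close> \<open>w \<in> V\<close> by metis
  qed
  have img: "ord ` V = {0..<n}"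
  proof
    show "ord ` V \<subseteq> {0..<n}" unfolding ord_def using hlt by fastforce
    show "{0..<n} \<subseteq> ord ` V"
    proof
      fix m assume m: "m \<in> {0..<n}"
      define i where "i = n - 1 - m"
      have i: "i < n" using m unfolding i_def by auto
      have inV: "L ! i \<in> V" using i L(1) setL by auto
      have "ord (L ! i) = n - 1 - i" unfolding ord_def using Lh[OF i] by simp
      hence "ord (L ! i) = m" using m unfolding i_def by auto
      thus "m \<in> ord ` V" using inV by (metis image_eqI)
    qed
  qed
  have ordprop: "(\<exists>u\<in>V. E v u \<and> ord u > ord v) \<or> (\<forall>j\<in>V. E v j \<longrightarrow> (\<forall>u\<in>V. E j u \<longrightarrow> ord u \<le> ord v))"
    if v: "v \<in> V" for v
  proof -
    define i where "i = h v"
    have i: "i < length L" "L ! i = v" using hlt[OF v] hL[OF v] L(1) unfolding i_def by auto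
    have ordL: "ord (L ! l) = n - 1 - l" if "l < n" for l unfolding ord_def using Lh[OF that] by simp
    from L(4) i(1) have "(\<exists>l<i. E (L!i) (L!l)) \<or> (\<forall>x\<in>V - set (take i L). \<forall>y\<in>set (take i L). \<not> E x y)"
      unfolding Pl_def by blast
    then show ?thesis
    proof
      assume "\<exists>l<i. E (L!i) (L!l)"
      then obtain l where l: "l < i" "E v (L!l)" using i by auto
      have "L ! l \<in> V" using l i L(1) setL by auto
      moreover have "ord (L ! l) > ord v" using ordL[of l] ordL[of i] l i L(1) by auto
      ultimately show ?thesis using l by blast
    next
      assume sep: "\<forall>x\<in>V - set (take i L). \<forall>y\<in>set (take i L). \<not> E x y"
      show ?thesis
      proof (cases "\<exists>u\<in>V. E v u \<and> ord u > ord v")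
        case True thus ?thesis by blast
      next
        case False
        have "\<forall>j\<in>V. E v j \<longrightarrow> (\<forall>u\<in>V. E j u \<longrightarrow> ord u \<le> ord v)"
        proof (intro ballI impI)
          fix j u assume j: "j \<in> V" "E v j" and u: "u \<in> V" "E j u"
          have "h j \<ge> i"
          proof (rule ccontr)
            assume "\<not> h j \<ge> i"
            hence "ord j > ord v" using ordL[of "h j"] ordL[of i] hL[OF j(1)] i L(1) hlt[OF j(1)] by auto
            thus False using False j by blast
          qed
          hence jn: "j \<notin> set (take i L)" using L(2) hL[OF j(1)] hlt[OF j(1)] L(1)
            by (metis in_set_conv_nth length_take min_less_iff_conj nth_eq_iff_index_eq nth_take not_le)
          have "u \<notin> set (take i L)" using sep j jn u by blast
          hence "h u \<ge> i" using hL[OF u(1)] hlt[OF u(1)] L(1)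
            by (metis in_set_conv_nth length_take min_less_iff_conj nth_take not_le)
          thus "ord u \<le> ord v" using ordL[of "h u"] ordL[of i] hL[OF u(1)] i L(1) hlt[OF u(1)] by auto
        qed
        thus ?thesis by blast
      qed
    qed
  qed
  show ?thesis using inj img ordprop unfolding n_def by blast
qed

lemma bij_zero:
  assumes fin: "finite M" and x: "x \<in> M"
  shows "\<exists>f. bij_betw f M {0..<card M} \<and> f x = 0"
proof -
  obtain g where g: "bij_betw g M {0..<card M}" using ex_bij_betw_finite_nat[OF fin] by blast
  define n where "n = card M"
  have gx: "g x < n" using g x unfolding n_def by (auto dest: bij_betwE)
  define sw where "sw k = (if k = 0 then g x else if k = g x then 0 else k)" for k
  have sw: "bij_betw sw {0..<n} {0..<n}"
  proof (rule bij_betw_imageI)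
    show "inj_on sw {0..<n}" unfolding sw_def by (rule inj_onI) (auto split: if_splits)
    show "sw ` {0..<n} = {0..<n}"
    proof
      show "sw ` {0..<n} \<subseteq> {0..<n}" unfolding sw_def using gx by auto
      show "{0..<n} \<subseteq> sw ` {0..<n}"
      proof
        fix k assume k: "k \<in> {0..<n}"
        have "sw (sw k) = k" unfolding sw_def by auto
        moreover have "sw k \<in> {0..<n}" unfolding sw_def using gx k by auto
        ultimately show "k \<in> sw ` {0..<n}" by (metis image_eqI)
      qed
    qed
  qed
  have "bij_betw (sw \<circ> g) M {0..<n}" using bij_betw_trans[OF g[folded n_def] sw] .
  moreover have "(sw \<circ> g) x = 0" unfolding sw_def by simp
  ultimately show ?thesis unfolding n_def by blast
qed

lemma grp_set3:
  fixes d g :: nat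
  assumes "d \<ge> 2"
  shows "{i. i < d \<and> min (i div 2) (d div 2 - 1) = g} \<subseteq> {2*g, 2*g+1, 2*g+2}"
  using assms by auto presburger?

lemma grp_set0:
  fixes d :: nat
  assumes "d \<ge> 2" "d \<noteq> 3"
  shows "{i. i < d \<and> min (i div 2) (d div 2 - 1) = 0} \<subseteq> {0, 1}"
  using assms by auto presburger?

lemma greedy6:
  fixes X :: "'b set" and R :: "'b \<Rightarrow> 'b \<Rightarrow> bool"
  assumes finX: "finite X" and bnd: "\<forall>e\<in>X. card {e'\<in>X. R e e'} \<le> 4"
    and sym: "\<forall>e e'. R e e' \<longrightarrow> R e' e" and irr: "\<forall>e. \<not> R e e"
  shows "\<exists>f. \<forall>e\<in>X. f e \<in> {1..6::nat} \<and> (\<forall>e'\<in>X. R e e' \<longrightarrow> f e \<noteq> f e')"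
proof -
  have "\<exists>f. \<forall>e\<in>F. f e \<in> {1..6::nat} \<and> (\<forall>e'\<in>F. R e e' \<longrightarrow> f e \<noteq> f e')" if "F \<subseteq> X" for F
    using finite_subset[OF that finX] that
  proof (induction F rule: finite_subset_induct')
    case empty
    then show ?case by simp
  next
    case (insert a F)
    then obtain f where f: "\<forall>e\<in>F. f e \<in> {1..6::nat} \<and> (\<forall>e'\<in>F. R e e' \<longrightarrow> f e \<noteq> f e')" by blast
    define Fb where "Fb = f ` {e'\<in>F. R a e'}"
    have "card Fb \<le> card {e'\<in>F. R a e'}" unfolding Fb_def using insert by (intro card_image_le) simp
    also have "\<dots> \<le> card {e'\<in>X. R a e'}" using insert finX by (intro card_mono) auto
    also have "\<dots> \<le> 4" using bnd insert by blast
    finally have cFb: "card Fb \<le> 4" .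
    have "\<not> {1..6::nat} \<subseteq> Fb"
    proof
      assume "{1..6::nat} \<subseteq> Fb"
      hence "card {1..6::nat} \<le> card Fb" using insert unfolding Fb_def by (intro card_mono) auto
      thus False using cFb by simp
    qed
    then obtain col where col: "col \<in> {1..6::nat}" "col \<notin> Fb" by blast
    define f' where "f' = f(a := col)"
    have "\<forall>e\<in>insert a F. f' e \<in> {1..6::nat} \<and> (\<forall>e'\<in>insert a F. R e e' \<longrightarrow> f' e \<noteq> f' e')"
    proof (intro ballI conjI impI)
      fix e assume e: "e \<in> insert a F"
      show "f' e \<in> {1..6}" using e f col unfolding f'_def by auto
      fix e' assume e': "e' \<in> insert a F" and R: "R e e'"
      show "f' e \<noteq> f' e'"
      proof (cases "e = a")
        case True
        hence "e' \<noteq> a" using R irr by blast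
        hence "e' \<in> F" using e' by simp
        hence "f e' \<in> Fb" unfolding Fb_def using R True by blast
        thus ?thesis using True col \<open>e' \<noteq> a\<close> unfolding f'_def by auto
      next
        case False
        hence eF: "e \<in> F" using e by simp
        show ?thesis
        proof (cases "e' = a")
          case True
          hence "f e \<in> Fb" unfolding Fb_def using R sym eF by blast
          thus ?thesis using True col False unfolding f'_def by auto
        next
          case False2: False
          thus ?thesis using f eF e' R False unfolding f'_def by auto
        qed
      qed
    qed
    thus ?case by blast
  qed
  thus ?thesis by blast
qed

lemma card3: "card {a, b, c} \<le> 3"
  by (simp add: card_insert_if)

lemma card2: "card {a, b} \<le> 2"
  by (simp add: card_insert_if)

locale G =
  fixes V :: "'a set" and E :: "'a \<Rightarrow> 'a \<Rightarrow> bool" and ord :: "'a \<Rightarrow> nat"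
  assumes sg: "simple_graph V E" and md: "min_degree_ge V E 2"
    and oinj: "inj_on ord V" and oimg: "ord ` V = {0..<card V}"
    and oprop: "\<forall>v\<in>V. (\<exists>u\<in>V. E v u \<and> ord u > ord v) \<or> (\<forall>j\<in>V. E v j \<longrightarrow> (\<forall>u\<in>V. E j u \<longrightarrow> ord u \<le> ord v))"
begin

abbreviation N where "N v \<equiv> nbrs V E v"
abbreviation d where "d v \<equiv> deg V E v"

lemma finV: "finite V" using sg unfolding simple_graph_def by simp
lemma N_iff: "u \<in> N v \<longleftrightarrow> u \<in> V \<and> E v u" unfolding nbrs_def by simp
lemma N_sub: "N v \<subseteq> V" unfolding nbrs_def by auto
lemma finN: "finite (N v)" using finV N_sub finite_subset by blast
lemma N_sym: "u \<in> N v \<Longrightarrow> v \<in> V \<Longrightarrow> v \<in> N u" using sg unfolding simple_graph_def nbrs_def by auto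
lemma N_irr: "v \<notin> N v" using sg unfolding simple_graph_def nbrs_def by auto
lemma N_ne: "u \<in> N v \<Longrightarrow> u \<noteq> v" using N_irr by auto
lemma E_V: "E u v \<Longrightarrow> u \<in> V \<and> v \<in> V" using sg unfolding simple_graph_def by auto
lemma d_card: "d v = card (N v)" unfolding deg_def by simp
lemma d2: "v \<in> V \<Longrightarrow> d v \<ge> 2" using md unfolding min_degree_ge_def by auto

definition nonroot where "nonroot v \<longleftrightarrow> (\<exists>u\<in>N v. ord u > ord v)"
definition par where "par v = (SOME u. u \<in> N v \<and> ord u > ord v)"

lemma par: "nonroot v \<Longrightarrow> par v \<in> N v \<and> ord (par v) > ord v"
proof -
  assume "nonroot v"
  hence "\<exists>u. u \<in> N v \<and> ord u > ord v" unfolding nonroot_def by blast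
  thus ?thesis unfolding par_def by (rule someI_ex)
qed

lemma root_prop: "v \<in> V \<Longrightarrow> \<not> nonroot v \<Longrightarrow> j \<in> N v \<Longrightarrow> u \<in> N j \<Longrightarrow> ord u \<le> ord v"
proof -
  assume a: "v \<in> V" "\<not> nonroot v" "j \<in> N v" "u \<in> N j"
  have "\<not> (\<exists>u\<in>V. E v u \<and> ord u > ord v)" using a(2) N_iff unfolding nonroot_def by blast
  hence "\<forall>j\<in>V. E v j \<longrightarrow> (\<forall>u\<in>V. E j u \<longrightarrow> ord u \<le> ord v)" using oprop a(1) by blast
  thus ?thesis using a(3,4) unfolding N_iff by blast
qed

lemma root_nbr_lt: "v \<in> V \<Longrightarrow> \<not> nonroot v \<Longrightarrow> j \<in> N v \<Longrightarrow> ord j < ord v"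
proof -
  assume v: "v \<in> V" "\<not> nonroot v" "j \<in> N v"
  hence "ord j \<le> ord v" unfolding nonroot_def by auto
  moreover have "j \<noteq> v" using N_ne v by auto
  moreover have "j \<in> V" using v N_sub by auto
  ultimately show ?thesis using oinj v(1) by (metis inj_on_eq_iff le_neq_implies_less)
qed

lemma ord_inj: "u \<in> V \<Longrightarrow> v \<in> V \<Longrightarrow> ord u = ord v \<Longrightarrow> u = v"
  using oinj by (meson inj_on_eq_iff)

lemma pos_exists: "\<exists>pos. \<forall>v\<in>V. bij_betw (pos v) (N v) {0..<d v} \<and> (nonroot v \<longrightarrow> pos v (par v) = 0)"
proof -
  have "\<forall>v\<in>V. \<exists>f. bij_betw f (N v) {0..<d v} \<and> (nonroot v \<longrightarrow> f (par v) = 0)"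
  proof
    fix v assume v: "v \<in> V"
    show "\<exists>f. bij_betw f (N v) {0..<d v} \<and> (nonroot v \<longrightarrow> f (par v) = 0)"
    proof (cases "nonroot v")
      case True
      then show ?thesis using bij_zero[OF finN par[OF True, THEN conjunct1]] d_card by auto
    next
      case False
      then show ?thesis using ex_bij_betw_finite_nat[OF finN] d_card by auto
    qed
  qed
  thus ?thesis by (rule bchoice)
qed

definition posf where "posf = (SOME pos. \<forall>v\<in>V. bij_betw (pos v) (N v) {0..<d v} \<and> (nonroot v \<longrightarrow> pos v (par v) = 0))"

lemma posf: "v \<in> V \<Longrightarrow> bij_betw (posf v) (N v) {0..<d v}"
  "v \<in> V \<Longrightarrow> nonroot v \<Longrightarrow> posf v (par v) = 0"
  using someI_ex[OF pos_exists] unfolding posf_def by blast+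

definition grp where "grp v u = min (posf v u div 2) (d v div 2 - 1)"

lemma grp_lt: "v \<in> V \<Longrightarrow> grp v u < d v div 2"
  using d2[of v] unfolding grp_def by auto

lemma grp_partners:
  assumes v: "v \<in> V" and u: "u \<in> N v"
  shows "card {u'\<in>N v. u' \<noteq> u \<and> grp v u' = grp v u} \<le> 2"
proof -
  define S where "S = {u'\<in>N v. grp v u' = grp v u}"
  have "posf v ` S \<subseteq> {i. i < d v \<and> min (i div 2) (d v div 2 - 1) = grp v u}"
    using posf(1)[OF v] unfolding S_def grp_def by (auto dest: bij_betwE)
  also have "\<dots> \<subseteq> {2*grp v u, 2*grp v u+1, 2*grp v u+2}" using grp_set3 d2[OF v] by blast
  finally have sub: "posf v ` S \<subseteq> {2*grp v u, 2*grp v u+1, 2*grp v u+2}" .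
  have "card (posf v ` S) \<le> card {2*grp v u, 2*grp v u+1, 2*grp v u+2}" by (rule card_mono[OF _ sub]) simp
  also have "\<dots> \<le> 3" by (rule card3)
  finally have "card (posf v ` S) \<le> 3" .
  moreover have "inj_on (posf v) S"
    by (rule inj_on_subset[OF bij_betw_imp_inj_on[OF posf(1)[OF v]]]) (auto simp: S_def)
  ultimately have "card S \<le> 3" by (simp add: card_image)
  moreover have "{u'\<in>N v. u' \<noteq> u \<and> grp v u' = grp v u} = S - {u}" unfolding S_def by auto
  moreover have "u \<in> S" unfolding S_def using u by simp
  moreover have "finite S" unfolding S_def using finN by simp
  ultimately show ?thesis by simp
qed

lemma grp_par:
  assumes v: "v \<in> V" "nonroot v" "d v \<noteq> 3"
  shows "card {u'\<in>N v. u' \<noteq> par v \<and> grp v u' = grp v (par v)} \<le> 1"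
proof -
  have g0: "grp v (par v) = 0" unfolding grp_def using posf(2)[OF v(1,2)] by simp
  define S where "S = {u'\<in>N v. grp v u' = 0}"
  have "posf v ` S \<subseteq> {i. i < d v \<and> min (i div 2) (d v div 2 - 1) = 0}"
    using posf(1)[OF v(1)] unfolding S_def grp_def by (auto dest: bij_betwE)
  also have "\<dots> \<subseteq> {0, 1}" using grp_set0 d2[OF v(1)] v(3) by blast
  finally have sub: "posf v ` S \<subseteq> {0, 1}" .
  have "card (posf v ` S) \<le> card {0::nat, 1}" by (rule card_mono[OF _ sub]) simp
  hence "card (posf v ` S) \<le> 2" by simp
  moreover have "inj_on (posf v) S"
    by (rule inj_on_subset[OF bij_betw_imp_inj_on[OF posf(1)[OF v(1)]]]) (auto simp: S_def)
  ultimately have "card S \<le> 2" by (simp add: card_image)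
  moreover have "{u'\<in>N v. u' \<noteq> par v \<and> grp v u' = grp v (par v)} = S - {par v}" unfolding S_def g0 by auto
  moreover have "par v \<in> S" unfolding S_def using par[OF v(2)] g0 by simp
  moreover have "finite S" unfolding S_def using finN by simp
  ultimately show ?thesis by simp
qed

lemma majority_rb:
  assumes v: "v \<in> V"
    and rb: "\<forall>u1\<in>N v. \<forall>u2\<in>N v. u1 \<noteq> u2 \<and> grp v u1 = grp v u2 \<longrightarrow> c {v,u1} \<noteq> c {v,u2}"
  shows "2 * card {u\<in>N v. c {v,u} = i} \<le> d v"
proof -
  define C where "C = {u\<in>N v. c {v,u} = i}"
  have "inj_on (grp v) C" unfolding C_def using rb by (intro inj_onI) (metis (mono_tags, lifting) mem_Collect_eq)
  moreover have "grp v ` C \<subseteq> {..<d v div 2}" using grp_lt[OF v] by auto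
  ultimately have "card C \<le> card {..<d v div 2}" by (metis card_image card_mono finite_lessThan)
  thus ?thesis unfolding C_def by simp
qed

end

context G begin

definition sig :: "('a set \<Rightarrow> nat) \<Rightarrow> 'a \<Rightarrow> int" where
  "sig c w = (\<Sum>u\<in>N w. int (c {w,u}))"

definition cw :: "('a set \<Rightarrow> nat) \<Rightarrow> ('a set \<Rightarrow> nat) \<Rightarrow> 'a set \<Rightarrow> nat" where
  "cw a x = (\<lambda>e. a e + 6 * x e)"

definition desig where "desig e \<longleftrightarrow> (\<exists>w\<in>V. nonroot w \<and> e = {w, par w})"
definition asg where "asg k e \<longleftrightarrow> \<not> desig e \<or> (\<exists>w\<in>V. nonroot w \<and> ord w < k \<and> e = {w, par w})"

definition Inv where "Inv k a x lo \<longleftrightarrow>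
  (\<forall>v\<in>V. \<forall>u\<in>N v. a {v,u} \<in> {1..6} \<and> x {v,u} \<le> 2) \<and>
  (\<forall>v\<in>V. \<forall>u\<in>N v. ord v < ord u \<and> k \<le> ord u \<longrightarrow> x {v,u} = 1) \<and>
  (\<forall>w\<in>V. \<forall>u1\<in>N w. \<forall>u2\<in>N w. u1 \<noteq> u2 \<and> grp w u1 = grp w u2 \<and> asg k {w,u1} \<and> asg k {w,u2}
      \<longrightarrow> a {w,u1} \<noteq> a {w,u2}) \<and>
  (\<forall>v\<in>V. ord v < k \<and> nonroot v \<longrightarrow> sig (cw a x) v = lo v \<or> sig (cw a x) v = lo v + 6) \<and>
  (\<forall>v\<in>V. \<forall>u\<in>N v. ord v < k \<and> ord u < k \<and> nonroot v \<and> nonroot u \<longrightarrow>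
      lo v - lo u \<noteq> -6 \<and> lo v - lo u \<noteq> 0 \<and> lo v - lo u \<noteq> 6) \<and>
  (\<forall>r\<in>V. \<forall>j\<in>N r. ord r < k \<and> \<not> nonroot r \<longrightarrow> sig (cw a x) r \<noteq> sig (cw a x) j)"

definition xupd :: "('a set \<Rightarrow> nat) \<Rightarrow> 'a \<Rightarrow> 'a set \<Rightarrow> ('a \<Rightarrow> int) \<Rightarrow> 'a set \<Rightarrow> nat" where
  "xupd x v Y eps e = (if e \<in> (\<lambda>j. {j,v}) ` {j\<in>Y. eps j = 1} then 2
     else if e \<in> (\<lambda>j. {j,v}) ` {j\<in>Y. eps j = -1} then 0 else x e)"

lemma sig_cong: "(\<And>u. u \<in> N w \<Longrightarrow> c' {w,u} = c {w,u}) \<Longrightarrow> sig c' w = sig c w"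
  unfolding sig_def by (rule sum.cong) auto

lemma sig_one:
  assumes u0: "u0 \<in> N w" and eq: "\<And>u. u \<in> N w \<Longrightarrow> u \<noteq> u0 \<Longrightarrow> c' {w,u} = c {w,u}"
  shows "sig c' w = sig c w - int (c {w,u0}) + int (c' {w,u0})"
proof -
  have "sig c' w = int (c' {w,u0}) + (\<Sum>u\<in>N w - {u0}. int (c' {w,u}))"
    unfolding sig_def using u0 finN by (simp add: sum.remove)
  moreover have "sig c w = int (c {w,u0}) + (\<Sum>u\<in>N w - {u0}. int (c {w,u}))"
    unfolding sig_def using u0 finN by (simp add: sum.remove)
  moreover have "(\<Sum>u\<in>N w - {u0}. int (c' {w,u})) = (\<Sum>u\<in>N w - {u0}. int (c {w,u}))"
    using eq by (intro sum.cong) auto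
  ultimately show ?thesis by simp
qed

lemma xupd_other: "v \<notin> e \<Longrightarrow> xupd x v Y eps e = x e"
  unfolding xupd_def by auto

lemma xupd_nbr:
  assumes "u \<in> N v" "Y \<subseteq> N v"
  shows "xupd x v Y eps {v,u} = (if u \<in> Y \<and> eps u = 1 then 2 else if u \<in> Y \<and> eps u = -1 then 0 else x {v,u})"
proof -
  have un: "u \<noteq> v" using assms N_ne by auto
  have key: "{v,u} = {j,v} \<longleftrightarrow> j = u" if "j \<in> Y" for j
    using that assms N_ne un by (auto simp: doubleton_eq_iff)
  have A: "{v,u} \<in> (\<lambda>j. {j,v}) ` S \<longleftrightarrow> u \<in> S" if "S \<subseteq> Y" for S
  proof
    assume "{v,u} \<in> (\<lambda>j. {j,v}) ` S"
    then obtain j where "j \<in> S" "{v,u} = {j,v}" by blast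
    thus "u \<in> S" using key[of j] that by blast
  next
    assume "u \<in> S"
    thus "{v,u} \<in> (\<lambda>j. {j,v}) ` S" by (metis image_eqI insert_commute)
  qed
  show ?thesis unfolding xupd_def using A[of "{j\<in>Y. eps j = 1}"] A[of "{j\<in>Y. eps j = -1}"] by auto
qed

lemma asg_Suc:
  assumes v: "v \<in> V" "ord v = k"
  shows "asg (Suc k) e \<longleftrightarrow> asg k e \<or> (nonroot v \<and> e = {v, par v})"
proof
  assume "asg (Suc k) e"
  then show "asg k e \<or> (nonroot v \<and> e = {v, par v})"
    unfolding asg_def using ord_inj v by (metis less_antisym)
next
  assume "asg k e \<or> (nonroot v \<and> e = {v, par v})"
  then show "asg (Suc k) e" unfolding asg_def using v by auto
qed

lemma x_one_at_v:
  assumes I: "Inv k a x lo" and v: "v \<in> V" "ord v = k" and u: "u \<in> N v"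
  shows "x {v,u} = 1"
proof -
  have I2: "\<forall>v\<in>V. \<forall>u\<in>N v. ord v < ord u \<and> k \<le> ord u \<longrightarrow> x {v,u} = 1" using I unfolding Inv_def by blast
  have uV: "u \<in> V" using u N_sub by auto
  have "ord u \<noteq> ord v" using ord_inj uV v(1) N_ne u by metis
  then show ?thesis
  proof (cases "ord v < ord u")
    case True
    thus ?thesis using I2 v u by auto
  next
    case False
    hence "ord u < ord v" using \<open>ord u \<noteq> ord v\<close> by simp
    hence "x {u,v} = 1" using I2 uV N_sym[OF u v(1)] v by auto
    thus ?thesis by (simp add: insert_commute)
  qed
qed

lemma S1:
  assumes v: "v \<in> V" and w: "w \<in> V" "w \<noteq> v" "w \<notin> N v"
    and a': "\<And>e. v \<notin> e \<Longrightarrow> a' e = a e"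
  shows "sig (cw a' (xupd x v Y eps)) w = sig (cw a x) w"
proof (rule sig_cong)
  fix u assume u: "u \<in> N w"
  have "u \<noteq> v" using u w N_sym[OF _ w(1)] by blast
  hence "v \<notin> {w,u}" using w by auto
  thus "cw a' (xupd x v Y eps) {w,u} = cw a x {w,u}" unfolding cw_def using a' xupd_other by simp
qed

lemma S2:
  assumes I: "Inv k a x lo" and v: "v \<in> V" "ord v = k" and j: "j \<in> N v" "ord j < k"
    and Y: "Y \<subseteq> N v"
    and a': "\<And>e. v \<notin> e \<Longrightarrow> a' e = a e" and a'j: "a' {j,v} = a {j,v}"
    and epsj: "eps j = 1 \<or> eps j = -1"
  shows "sig (cw a' (xupd x v Y eps)) j = sig (cw a x) j + 6 * (if j \<in> Y then eps j else 0)"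
proof -
  have jV: "j \<in> V" using j N_sub by auto
  have vj: "v \<in> N j" using N_sym[OF j(1) v(1)] .
  have jv: "j \<noteq> v" using j N_ne by auto
  have "sig (cw a' (xupd x v Y eps)) j = sig (cw a x) j - int (cw a x {j,v}) + int (cw a' (xupd x v Y eps) {j,v})"
  proof (rule sig_one[OF vj])
    fix u assume "u \<in> N j" "u \<noteq> v"
    hence "v \<notin> {j,u}" using jv by auto
    thus "cw a' (xupd x v Y eps) {j,u} = cw a x {j,u}" unfolding cw_def using a' xupd_other by simp
  qed
  moreover have "x {j,v} = 1" using x_one_at_v[OF I v j(1)] by (simp add: insert_commute)
  moreover have "xupd x v Y eps {j,v} = (if j \<in> Y \<and> eps j = 1 then 2 else if j \<in> Y \<and> eps j = -1 then 0 else x {v,j})"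
    using xupd_nbr[OF j(1) Y] by (simp add: insert_commute)
  moreover have "x {v,j} = 1" using x_one_at_v[OF I v j(1)] .
  ultimately show ?thesis unfolding cw_def using a'j epsj by auto
qed

lemma S3:
  assumes I: "Inv k a x lo" and v: "v \<in> V" "ord v = k" and Y: "Y \<subseteq> N v"
    and eps: "\<forall>j\<in>Y. eps j = 1 \<or> eps j = -1"
  shows "sig (cw a' (xupd x v Y eps)) v = (\<Sum>u\<in>N v. int (a' {v,u})) + 6 * int (d v) + 6 * (\<Sum>j\<in>Y. eps j)"
proof -
  have xu: "int (xupd x v Y eps {v,u}) = 1 + (if u \<in> Y then eps u else 0)" if u: "u \<in> N v" for u
    using xupd_nbr[OF u Y, of x eps] x_one_at_v[OF I v u] eps by auto
  have "sig (cw a' (xupd x v Y eps)) v = (\<Sum>u\<in>N v. int (a' {v,u}) + 6 * (1 + (if u \<in> Y then eps u else 0)))"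
    unfolding sig_def cw_def using xu by (intro sum.cong) auto
  also have "\<dots> = (\<Sum>u\<in>N v. int (a' {v,u})) + 6 * int (card (N v)) + 6 * (\<Sum>u\<in>N v. (if u \<in> Y then eps u else 0))"
    by (simp add: sum.distrib sum_distrib_left)
  also have "(\<Sum>u\<in>N v. (if u \<in> Y then eps u else 0)) = (\<Sum>j\<in>Y. eps j)"
    using sum.inter_restrict[OF finN, of eps v Y, symmetric] Y by (simp add: Int_absorb1 inf.absorb2)
  finally show ?thesis using d_card by simp
qed

lemma xupd_empty: "xupd x v {} eps = x"
  by (rule ext) (simp add: xupd_def)

lemma xupd_le2: "x e \<le> 2 \<Longrightarrow> xupd x v Y eps e \<le> 2"
  unfolding xupd_def by (cases "e \<in> (\<lambda>j. {j,v}) ` {j\<in>Y. eps j = 1}"; cases "e \<in> (\<lambda>j. {j,v}) ` {j\<in>Y. eps j = -1}") simp_all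

lemma step_root:
  assumes I: "Inv k a x lo" and v: "v \<in> V" "ord v = k" and rt: "\<not> nonroot v"
  shows "\<exists>a' x' lo'. Inv (Suc k) a' x' lo'"
proof -
  note Iu = I[unfolded Inv_def]
  have I1: "\<forall>v\<in>V. \<forall>u\<in>N v. a {v,u} \<in> {1..6} \<and> x {v,u} \<le> 2" using Iu by (rule conjunct1)
  have I2: "\<forall>v\<in>V. \<forall>u\<in>N v. ord v < ord u \<and> k \<le> ord u \<longrightarrow> x {v,u} = 1"
    using Iu by (rule conjunct1[OF conjunct2])
  have I3: "\<forall>w\<in>V. \<forall>u1\<in>N w. \<forall>u2\<in>N w. u1 \<noteq> u2 \<and> grp w u1 = grp w u2 \<and> asg k {w,u1} \<and> asg k {w,u2}
      \<longrightarrow> a {w,u1} \<noteq> a {w,u2}" using Iu by (rule conjunct1[OF conjunct2[OF conjunct2]])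
  have I4: "\<forall>v\<in>V. ord v < k \<and> nonroot v \<longrightarrow> sig (cw a x) v = lo v \<or> sig (cw a x) v = lo v + 6"
    using Iu by (rule conjunct1[OF conjunct2[OF conjunct2[OF conjunct2]]])
  have I5: "\<forall>v\<in>V. \<forall>u\<in>N v. ord v < k \<and> ord u < k \<and> nonroot v \<and> nonroot u \<longrightarrow>
      lo v - lo u \<noteq> -6 \<and> lo v - lo u \<noteq> 0 \<and> lo v - lo u \<noteq> 6"
    using Iu by (rule conjunct1[OF conjunct2[OF conjunct2[OF conjunct2[OF conjunct2]]]])
  have I6: "\<forall>r\<in>V. \<forall>j\<in>N r. ord r < k \<and> \<not> nonroot r \<longrightarrow> sig (cw a x) r \<noteq> sig (cw a x) j"
    using Iu by (rule conjunct2[OF conjunct2[OF conjunct2[OF conjunct2[OF conjunct2]]]])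
  define c where "c = cw a x"
  define eps where "eps j = (if sig c j = lo j then 1 else -1::int)" for j
  have epsv: "\<forall>j\<in>N v. eps j = 1 \<or> eps j = -1" unfolding eps_def by auto
  have Nlt: "\<And>j. j \<in> N v \<Longrightarrow> ord j < k" using root_nbr_lt[OF v(1) rt] v(2) by blast
  have c2: "card (N v) \<ge> 2" using d2[OF v(1)] d_card by simp
  obtain Y where Y: "Y \<subseteq> N v"
    and Yok: "\<forall>j\<in>N v. sig c v + 6 * (\<Sum>k\<in>Y. eps k) \<noteq> sig c j + 6 * (if j \<in> Y then eps j else 0)"
    using root_choice[OF finN c2 epsv, of "sig c v" "sig c"] by blast
  define x' where "x' = xupd x v Y eps"
  define c' where "c' = cw a x'"
  have c'v: "sig c' v = sig c v + 6 * (\<Sum>j\<in>Y. eps j)"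
  proof -
    have "sig c' v = (\<Sum>u\<in>N v. int (a {v,u})) + 6 * int (d v) + 6 * (\<Sum>j\<in>Y. eps j)"
      unfolding c'_def x'_def using S3[OF I v Y] epsv Y by blast
    moreover have "sig c v = (\<Sum>u\<in>N v. int (a {v,u})) + 6 * int (d v) + 6 * (\<Sum>j\<in>{}. eps j)"
      unfolding c_def using S3[OF I v, of "{}" eps a] xupd_empty by simp
    ultimately show ?thesis by simp
  qed
  have c'j: "sig c' j = sig c j + 6 * (if j \<in> Y then eps j else 0)" if j: "j \<in> N v" for j
    unfolding c'_def x'_def c_def using S2[OF I v j Nlt[OF j] Y, of a] epsv j by blast
  have c'o: "sig c' w = sig c w" if "w \<in> V" "w \<noteq> v" "w \<notin> N v" for w
    unfolding c'_def x'_def c_def using S1[OF v(1) that, of a a] by blast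
  have "Inv (Suc k) a x' lo"
    unfolding Inv_def
  proof (intro conjI)
    show "\<forall>v\<in>V. \<forall>u\<in>N v. a {v,u} \<in> {1..6} \<and> x' {v,u} \<le> 2"
      using I1 xupd_le2 unfolding x'_def by blast
    show "\<forall>w\<in>V. \<forall>u\<in>N w. ord w < ord u \<and> Suc k \<le> ord u \<longrightarrow> x' {w,u} = 1"
    proof (intro ballI impI)
      fix w u assume w: "w \<in> V" and u: "u \<in> N w" and o: "ord w < ord u \<and> Suc k \<le> ord u"
      have "w \<noteq> v"
      proof
        assume "w = v"
        hence "ord u < k" using Nlt u by blast
        thus False using o by simp
      qed
      moreover have "u \<noteq> v" using o v by auto
      ultimately have "v \<notin> {w,u}" by auto
      thus "x' {w,u} = 1" unfolding x'_def using xupd_other I2 w u o by auto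
    qed
    show "\<forall>w\<in>V. \<forall>u1\<in>N w. \<forall>u2\<in>N w. u1 \<noteq> u2 \<and> grp w u1 = grp w u2 \<and> asg (Suc k) {w,u1} \<and> asg (Suc k) {w,u2}
      \<longrightarrow> a {w,u1} \<noteq> a {w,u2}"
      using I3 asg_Suc[OF v] rt by blast
    show "\<forall>w\<in>V. ord w < Suc k \<and> nonroot w \<longrightarrow> sig (cw a x') w = lo w \<or> sig (cw a x') w = lo w + 6"
    proof (intro ballI impI)
      fix w assume w: "w \<in> V" and o: "ord w < Suc k \<and> nonroot w"
      hence wv: "w \<noteq> v" using rt by auto
      hence wk: "ord w < k" using o v ord_inj w by (metis less_antisym)
      have old: "sig c w = lo w \<or> sig c w = lo w + 6" using I4 w wk o unfolding c_def by blast
      show "sig (cw a x') w = lo w \<or> sig (cw a x') w = lo w + 6"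
      proof (cases "w \<in> N v")
        case True
        thus ?thesis using c'j[OF True] old unfolding c'_def eps_def by auto
      next
        case False
        thus ?thesis using c'o[OF w wv False] old unfolding c'_def by auto
      qed
    qed
    show "\<forall>w\<in>V. \<forall>u\<in>N w. ord w < Suc k \<and> ord u < Suc k \<and> nonroot w \<and> nonroot u \<longrightarrow>
      lo w - lo u \<noteq> -6 \<and> lo w - lo u \<noteq> 0 \<and> lo w - lo u \<noteq> 6"
    proof (intro ballI impI)
      fix w u assume w: "w \<in> V" and u: "u \<in> N w" and o: "ord w < Suc k \<and> ord u < Suc k \<and> nonroot w \<and> nonroot u"
      have uV: "u \<in> V" using u N_sub by auto
      have "w \<noteq> v" "u \<noteq> v" using o rt by auto
      hence "ord w < k" "ord u < k" using o v ord_inj w uV by (metis less_antisym)+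
      thus "lo w - lo u \<noteq> -6 \<and> lo w - lo u \<noteq> 0 \<and> lo w - lo u \<noteq> 6" using I5 w u o by blast
    qed
    show "\<forall>r\<in>V. \<forall>j\<in>N r. ord r < Suc k \<and> \<not> nonroot r \<longrightarrow> sig (cw a x') r \<noteq> sig (cw a x') j"
    proof (intro ballI impI)
      fix r j assume r: "r \<in> V" and j: "j \<in> N r" and o: "ord r < Suc k \<and> \<not> nonroot r"
      have jV: "j \<in> V" using j N_sub by auto
      show "sig (cw a x') r \<noteq> sig (cw a x') j"
      proof (cases "r = v")
        case True
        thus ?thesis using Yok c'v c'j j unfolding c'_def by auto
      next
        case False
        hence rk: "ord r < k" using o v ord_inj r by (metis less_antisym)
        have rN: "r \<notin> N v"
        proof
          assume "r \<in> N v"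
          hence "v \<in> N r" using N_sym v(1) by blast
          hence "ord v < ord r" using root_nbr_lt[OF r] o by blast
          thus False using rk v by simp
        qed
        have jv: "j \<noteq> v"
        proof
          assume "j = v"
          hence "ord v < ord r" using root_nbr_lt[OF r] o j by blast
          thus False using rk v by simp
        qed
        have jN: "j \<notin> N v"
        proof
          assume "j \<in> N v"
          hence "v \<in> N j" using N_sym v(1) by blast
          hence "ord v \<le> ord r" using root_prop[OF r] o j by blast
          thus False using rk v by simp
        qed
        have "sig c r \<noteq> sig c j" using I6 r j rk o unfolding c_def by blast
        thus ?thesis using c'o[OF r False rN] c'o[OF jV jv jN] unfolding c'_def by simp
      qed
    qed
  qed
  thus ?thesis by blast
qed

lemma edge_vp: "{w,u} = {v,p} \<Longrightarrow> u \<in> N w \<Longrightarrow> (w = v \<and> u = p) \<or> (w = p \<and> u = v)"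
  by (auto simp: doubleton_eq_iff)

lemma step_nonroot:
  assumes I: "Inv k a x lo" and v: "v \<in> V" "ord v = k" and nr: "nonroot v"
  shows "\<exists>a' x' lo'. Inv (Suc k) a' x' lo'"
proof -
  note Iu = I[unfolded Inv_def]
  have I1: "\<forall>v\<in>V. \<forall>u\<in>N v. a {v,u} \<in> {1..6} \<and> x {v,u} \<le> 2" using Iu by (rule conjunct1)
  have I2: "\<forall>v\<in>V. \<forall>u\<in>N v. ord v < ord u \<and> k \<le> ord u \<longrightarrow> x {v,u} = 1"
    using Iu by (rule conjunct1[OF conjunct2])
  have I3: "\<forall>w\<in>V. \<forall>u1\<in>N w. \<forall>u2\<in>N w. u1 \<noteq> u2 \<and> grp w u1 = grp w u2 \<and> asg k {w,u1} \<and> asg k {w,u2}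
      \<longrightarrow> a {w,u1} \<noteq> a {w,u2}" using Iu by (rule conjunct1[OF conjunct2[OF conjunct2]])
  have I4: "\<forall>v\<in>V. ord v < k \<and> nonroot v \<longrightarrow> sig (cw a x) v = lo v \<or> sig (cw a x) v = lo v + 6"
    using Iu by (rule conjunct1[OF conjunct2[OF conjunct2[OF conjunct2]]])
  have I5: "\<forall>v\<in>V. \<forall>u\<in>N v. ord v < k \<and> ord u < k \<and> nonroot v \<and> nonroot u \<longrightarrow>
      lo v - lo u \<noteq> -6 \<and> lo v - lo u \<noteq> 0 \<and> lo v - lo u \<noteq> 6"
    using Iu by (rule conjunct1[OF conjunct2[OF conjunct2[OF conjunct2[OF conjunct2]]]])
  have I6: "\<forall>r\<in>V. \<forall>j\<in>N r. ord r < k \<and> \<not> nonroot r \<longrightarrow> sig (cw a x) r \<noteq> sig (cw a x) j"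
    using Iu by (rule conjunct2[OF conjunct2[OF conjunct2[OF conjunct2[OF conjunct2]]]])
  define c where "c = cw a x"
  define eps where "eps j = (if sig c j = lo j then 1 else -1::int)" for j
  define p where "p = par v"
  have pN: "p \<in> N v" and pk: "ord p > k" using par[OF nr] v unfolding p_def by auto
  have pV: "p \<in> V" using pN N_sub by auto
  have vp: "v \<in> N p" using N_sym[OF pN v(1)] .
  define B where "B = {j\<in>N v. ord j < k}"
  have finB: "finite B" unfolding B_def using finN by simp
  have BN: "B \<subseteq> N v" unfolding B_def by auto
  have epsB: "\<forall>j\<in>B. eps j = 1 \<or> eps j = -1" unfolding eps_def by auto
  define S1 where "S1 = {u\<in>N v. u \<noteq> p \<and> grp v u = grp v p}"
  define S2 where "S2 = {u\<in>N p. u \<noteq> v \<and> grp p u = grp p v}"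
  define F where "F = (\<lambda>u. a {v,u}) ` S1 \<union> (\<lambda>u. a {p,u}) ` S2"
  have finF: "finite F" unfolding F_def S1_def S2_def using finN by simp
  have cS2: "card S2 \<le> 2" unfolding S2_def using grp_partners[OF pV vp] .
  have cS1: "card S1 \<le> 2" unfolding S1_def using grp_partners[OF v(1) pN] .
  have cF0: "card F \<le> card S1 + card S2"
  proof -
    have "card F \<le> card ((\<lambda>u. a {v,u}) ` S1) + card ((\<lambda>u. a {p,u}) ` S2)"
      unfolding F_def by (rule card_Un_le)
    also have "\<dots> \<le> card S1 + card S2" by (intro add_mono card_image_le) (simp_all add: S1_def S2_def finN)
    finally show ?thesis .
  qed
  have cF: "card F \<le> 3 \<or> (card F \<le> 4 \<and> card B \<le> 2)"
  proof (cases "d v = 3")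
    case True
    have "B \<subseteq> N v - {p}" unfolding B_def using pk by auto
    hence "card B \<le> card (N v - {p})" using finN by (intro card_mono) auto
    also have "\<dots> = 2" using True d_card pN finN by simp
    finally show ?thesis using cF0 cS1 cS2 by simp
  next
    case False
    have "card S1 \<le> 1" unfolding S1_def p_def using grp_par[OF v(1) nr False] .
    thus ?thesis using cF0 cS2 by simp
  qed
  define beta where "beta = (\<Sum>u\<in>N v - {p}. int (a {v,u})) + 6 * int (d v)"
  obtain \<alpha> Y L where a16: "\<alpha> \<in> {1..6}" and aF: "\<alpha> \<notin> F" and YB: "Y \<subseteq> B"
    and L: "L = beta + int \<alpha> + 6 * (\<Sum>k\<in>Y. eps k) \<or> L + 6 = beta + int \<alpha> + 6 * (\<Sum>k\<in>Y. eps k)"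
    and Lok: "\<forall>j\<in>B. L - lo j \<noteq> -6 \<and> L - lo j \<noteq> 0 \<and> L - lo j \<noteq> 6"
    using nonroot_choice[OF finB epsB finF cF, where lo=lo and beta=beta] by blast
  have YN: "Y \<subseteq> N v" using YB BN by auto
  have epsY: "\<forall>j\<in>Y. eps j = 1 \<or> eps j = -1" using epsB YB by auto
  define a' where "a' = a({v,p} := \<alpha>)"
  define x' where "x' = xupd x v Y eps"
  define lo' where "lo' = lo(v := L)"
  define c' where "c' = cw a' x'"
  have a'o: "\<And>e. v \<notin> e \<Longrightarrow> a' e = a e" unfolding a'_def by auto
  have a'j: "a' {j,v} = a {j,v}" if "j \<in> B" for j
  proof -
    have "j \<noteq> p" using that pk unfolding B_def by auto
    moreover have "j \<noteq> v" using that N_ne unfolding B_def by auto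
    ultimately have "{j,v} \<noteq> {v,p}" by (auto simp: doubleton_eq_iff)
    thus ?thesis unfolding a'_def by simp
  qed
  have c'v: "sig c' v = beta + int \<alpha> + 6 * (\<Sum>j\<in>Y. eps j)"
  proof -
    have "sig c' v = (\<Sum>u\<in>N v. int (a' {v,u})) + 6 * int (d v) + 6 * (\<Sum>j\<in>Y. eps j)"
      unfolding c'_def x'_def using S3[OF I v YN epsY] by blast
    moreover have "(\<Sum>u\<in>N v. int (a' {v,u})) = int \<alpha> + (\<Sum>u\<in>N v - {p}. int (a {v,u}))"
    proof -
      have "(\<Sum>u\<in>N v. int (a' {v,u})) = int (a' {v,p}) + (\<Sum>u\<in>N v - {p}. int (a' {v,u}))"
        using pN finN by (simp add: sum.remove)
      moreover have "(\<Sum>u\<in>N v - {p}. int (a' {v,u})) = (\<Sum>u\<in>N v - {p}. int (a {v,u}))"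
      proof (rule sum.cong)
        fix u assume "u \<in> N v - {p}"
        hence "{v,u} \<noteq> {v,p}" using N_ne by (auto simp: doubleton_eq_iff)
        thus "int (a' {v,u}) = int (a {v,u})" unfolding a'_def by simp
      qed simp
      ultimately show ?thesis unfolding a'_def by simp
    qed
    ultimately show ?thesis unfolding beta_def by simp
  qed
  have c'j: "sig c' j = sig c j + 6 * (if j \<in> Y then eps j else 0)" if j: "j \<in> B" for j
  proof -
    have jN: "j \<in> N v" "ord j < k" using j unfolding B_def by auto
    show ?thesis unfolding c'_def x'_def c_def using S2[OF I v jN YN, where a'=a' and eps=eps] a'o a'j[OF j] epsB j by blast
  qed
  have c'o: "sig c' w = sig c w" if "w \<in> V" "w \<noteq> v" "w \<notin> N v" for w
    unfolding c'_def x'_def c_def using S1[OF v(1) that, of a' a] a'o by blast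
  have inB: "w \<in> B" if "w \<in> N v" "ord w < Suc k" "w \<noteq> v" for w
  proof -
    have "w \<in> V" using that N_sub by auto
    hence "ord w \<noteq> k" using ord_inj v that(3) by metis
    thus ?thesis unfolding B_def using that by simp
  qed
  have "Inv (Suc k) a' x' lo'"
    unfolding Inv_def
  proof (intro conjI)
    show "\<forall>w\<in>V. \<forall>u\<in>N w. a' {w,u} \<in> {1..6} \<and> x' {w,u} \<le> 2"
      using I1 xupd_le2 a16 unfolding x'_def a'_def by auto
    show "\<forall>w\<in>V. \<forall>u\<in>N w. ord w < ord u \<and> Suc k \<le> ord u \<longrightarrow> x' {w,u} = 1"
    proof (intro ballI impI)
      fix w u assume w: "w \<in> V" and u: "u \<in> N w" and o: "ord w < ord u \<and> Suc k \<le> ord u"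
      have uv: "u \<noteq> v" using o v by auto
      show "x' {w,u} = 1"
      proof (cases "w = v")
        case True
        have "u \<notin> Y" using YB o unfolding B_def by auto
        thus ?thesis unfolding x'_def using xupd_nbr[of u v Y x eps] u True YN I2 w o by auto
      next
        case False
        hence "v \<notin> {w,u}" using uv by auto
        thus ?thesis unfolding x'_def using xupd_other I2 w u o by auto
      qed
    qed
    show "\<forall>w\<in>V. \<forall>u1\<in>N w. \<forall>u2\<in>N w. u1 \<noteq> u2 \<and> grp w u1 = grp w u2 \<and> asg (Suc k) {w,u1} \<and> asg (Suc k) {w,u2}
      \<longrightarrow> a' {w,u1} \<noteq> a' {w,u2}"
    proof (intro ballI impI)
      fix w u1 u2 assume w: "w \<in> V" and u1: "u1 \<in> N w" and u2: "u2 \<in> N w"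
        and h: "u1 \<noteq> u2 \<and> grp w u1 = grp w u2 \<and> asg (Suc k) {w,u1} \<and> asg (Suc k) {w,u2}"
      have ne12: "{w,u1} \<noteq> {w,u2}" using h u1 u2 N_ne by (auto simp: doubleton_eq_iff)
      show "a' {w,u1} \<noteq> a' {w,u2}"
      proof (cases "{w,u1} = {v,p}")
        case True
        hence a1: "a' {w,u1} = \<alpha>" unfolding a'_def by simp
        have a2: "a' {w,u2} = a {w,u2}" using True ne12 unfolding a'_def by auto
        from edge_vp[OF True u1] show ?thesis
        proof
          assume "w = v \<and> u1 = p"
          hence "u2 \<in> S1" unfolding S1_def using u2 h by auto
          hence "a {w,u2} \<in> F" unfolding F_def using \<open>w = v \<and> u1 = p\<close> by auto
          thus ?thesis using a1 a2 aF by auto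
        next
          assume "w = p \<and> u1 = v"
          hence "u2 \<in> S2" unfolding S2_def using u2 h by auto
          hence "a {w,u2} \<in> F" unfolding F_def using \<open>w = p \<and> u1 = v\<close> by auto
          thus ?thesis using a1 a2 aF by auto
        qed
      next
        case False1: False
        show ?thesis
        proof (cases "{w,u2} = {v,p}")
          case True
          hence a2: "a' {w,u2} = \<alpha>" unfolding a'_def by simp
          have a1: "a' {w,u1} = a {w,u1}" using False1 unfolding a'_def by auto
          from edge_vp[OF True u2] show ?thesis
          proof
            assume "w = v \<and> u2 = p"
            hence "u1 \<in> S1" unfolding S1_def using u1 h by auto
            hence "a {w,u1} \<in> F" unfolding F_def using \<open>w = v \<and> u2 = p\<close> by auto
            thus ?thesis using a1 a2 aF by auto
          next
            assume "w = p \<and> u2 = v"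
            hence "u1 \<in> S2" unfolding S2_def using u1 h by auto
            hence "a {w,u1} \<in> F" unfolding F_def using \<open>w = p \<and> u2 = v\<close> by auto
            thus ?thesis using a1 a2 aF by auto
          qed
        next
          case False2: False
          have "asg k {w,u1}" "asg k {w,u2}" using h False1 False2 asg_Suc[OF v] unfolding p_def by blast+
          hence "a {w,u1} \<noteq> a {w,u2}" using I3 w u1 u2 h by blast
          thus ?thesis using False1 False2 unfolding a'_def by simp
        qed
      qed
    qed
    show "\<forall>w\<in>V. ord w < Suc k \<and> nonroot w \<longrightarrow> sig (cw a' x') w = lo' w \<or> sig (cw a' x') w = lo' w + 6"
    proof (intro ballI impI)
      fix w assume w: "w \<in> V" and o: "ord w < Suc k \<and> nonroot w"
      show "sig (cw a' x') w = lo' w \<or> sig (cw a' x') w = lo' w + 6"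
      proof (cases "w = v")
        case True
        thus ?thesis using c'v L unfolding c'_def lo'_def by auto
      next
        case False
        hence wk: "ord w < k" using o v ord_inj w by (metis less_antisym)
        have old: "sig c w = lo w \<or> sig c w = lo w + 6" using I4 w wk o unfolding c_def by blast
        show ?thesis
        proof (cases "w \<in> N v")
          case True
          hence "w \<in> B" unfolding B_def using wk by simp
          thus ?thesis using c'j old False unfolding c'_def eps_def lo'_def by auto
        next
          case False2: False
          thus ?thesis using c'o[OF w False False2] old False unfolding c'_def lo'_def by auto
        qed
      qed
    qed
    show "\<forall>w\<in>V. \<forall>u\<in>N w. ord w < Suc k \<and> ord u < Suc k \<and> nonroot w \<and> nonroot u \<longrightarrow>
      lo' w - lo' u \<noteq> -6 \<and> lo' w - lo' u \<noteq> 0 \<and> lo' w - lo' u \<noteq> 6"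
    proof (intro ballI impI)
      fix w u assume w: "w \<in> V" and u: "u \<in> N w" and o: "ord w < Suc k \<and> ord u < Suc k \<and> nonroot w \<and> nonroot u"
      have uV: "u \<in> V" using u N_sub by auto
      have uw: "u \<noteq> w" using u N_ne by auto
      show "lo' w - lo' u \<noteq> -6 \<and> lo' w - lo' u \<noteq> 0 \<and> lo' w - lo' u \<noteq> 6"
      proof (cases "w = v")
        case True
        hence "u \<in> B" using inB u o uw by simp
        thus ?thesis using Lok True uw unfolding lo'_def by auto
      next
        case False
        show ?thesis
        proof (cases "u = v")
          case True
          hence "w \<in> N v" using N_sym[OF u w] by simp
          hence "w \<in> B" using inB o False by simp
          thus ?thesis using Lok True False unfolding lo'_def by fastforce
        next
          case False2: False
          hence "ord w < k" "ord u < k" using o v ord_inj w uV False by (metis less_antisym)+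
          thus ?thesis using I5 w u o False False2 unfolding lo'_def by simp
        qed
      qed
    qed
    show "\<forall>r\<in>V. \<forall>j\<in>N r. ord r < Suc k \<and> \<not> nonroot r \<longrightarrow> sig (cw a' x') r \<noteq> sig (cw a' x') j"
    proof (intro ballI impI)
      fix r j assume r: "r \<in> V" and j: "j \<in> N r" and o: "ord r < Suc k \<and> \<not> nonroot r"
      have jV: "j \<in> V" using j N_sub by auto
      have False0: "r \<noteq> v" using o nr by auto
      hence rk: "ord r < k" using o v ord_inj r by (metis less_antisym)
      have rN: "r \<notin> N v"
      proof
        assume "r \<in> N v"
        hence "v \<in> N r" using N_sym v(1) by blast
        hence "ord v < ord r" using root_nbr_lt[OF r] o by blast
        thus False using rk v by simp
      qed
      have jv: "j \<noteq> v"
      proof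
        assume "j = v"
        hence "ord v < ord r" using root_nbr_lt[OF r] o j by blast
        thus False using rk v by simp
      qed
      have jN: "j \<notin> N v"
      proof
        assume "j \<in> N v"
        hence "v \<in> N j" using N_sym v(1) by blast
        hence "ord v \<le> ord r" using root_prop[OF r] o j by blast
        thus False using rk v by simp
      qed
      have "sig c r \<noteq> sig c j" using I6 r j rk o unfolding c_def by blast
      thus "sig (cw a' x') r \<noteq> sig (cw a' x') j" using c'o[OF r False0 rN] c'o[OF jV jv jN] unfolding c'_def by simp
    qed
  qed
  thus ?thesis by blast
qed

end

context G begin

definition Rc where "Rc e e' \<longleftrightarrow> e \<noteq> e' \<and> (\<exists>w\<in>V. \<exists>u1\<in>N w. \<exists>u2\<in>N w. e = {w,u1} \<and> e' = {w,u2} \<and> grp w u1 = grp w u2)"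

lemma fin_edges: "finite (edges V E)"
proof -
  have "edges V E \<subseteq> (\<lambda>(u,v). {u,v}) ` (V \<times> V)" unfolding edges_def by auto
  thus ?thesis using finV finite_subset by blast
qed

lemma Rc_bound:
  assumes e: "e \<in> edges V E"
  shows "card {e'\<in>X. Rc e e'} \<le> 4"
proof -
  obtain y z where yz: "e = {y,z}" "y \<in> V" "z \<in> V" "E y z" using e unfolding edges_def by auto
  have zy: "z \<in> N y" "y \<in> N z" using yz N_iff sg unfolding simple_graph_def by auto
  define Sy where "Sy = {u\<in>N y. u \<noteq> z \<and> grp y u = grp y z}"
  define Sz where "Sz = {u\<in>N z. u \<noteq> y \<and> grp z u = grp z y}"
  have sub: "{e'\<in>X. Rc e e'} \<subseteq> (\<lambda>u. {y,u}) ` Sy \<union> (\<lambda>u. {z,u}) ` Sz"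
  proof
    fix e' assume "e' \<in> {e'\<in>X. Rc e e'}"
    then obtain w u1 u2 where h: "e \<noteq> e'" "w \<in> V" "u1 \<in> N w" "u2 \<in> N w" "e = {w,u1}" "e' = {w,u2}" "grp w u1 = grp w u2"
      unfolding Rc_def by blast
    from h(5) yz(1) have "(y = w \<and> z = u1) \<or> (y = u1 \<and> z = w)" by (auto simp: doubleton_eq_iff)
    thus "e' \<in> (\<lambda>u. {y,u}) ` Sy \<union> (\<lambda>u. {z,u}) ` Sz"
    proof
      assume c: "y = w \<and> z = u1"
      hence "u2 \<in> Sy" unfolding Sy_def using h by auto
      thus ?thesis using h(6) c by blast
    next
      assume c: "y = u1 \<and> z = w"
      hence "u2 \<in> Sz" unfolding Sz_def using h by auto
      thus ?thesis using h(6) c by blast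
    qed
  qed
  have "card {e'\<in>X. Rc e e'} \<le> card ((\<lambda>u. {y,u}) ` Sy \<union> (\<lambda>u. {z,u}) ` Sz)"
    by (rule card_mono[OF _ sub]) (simp add: Sy_def Sz_def finN)
  also have "\<dots> \<le> card ((\<lambda>u. {y,u}) ` Sy) + card ((\<lambda>u. {z,u}) ` Sz)" by (rule card_Un_le)
  also have "\<dots> \<le> card Sy + card Sz" by (intro add_mono card_image_le) (simp_all add: Sy_def Sz_def finN)
  also have "\<dots> \<le> 4" using grp_partners[OF yz(2) zy(1)] grp_partners[OF yz(3) zy(2)] unfolding Sy_def Sz_def by simp
  finally show ?thesis .
qed

lemma edge_in: "w \<in> V \<Longrightarrow> u \<in> N w \<Longrightarrow> {w,u} \<in> edges V E"
  unfolding edges_def using N_iff by blast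

lemma init: "\<exists>a x lo. Inv 0 a x lo"
proof -
  define X where "X = {e\<in>edges V E. \<not> desig e}"
  have finX: "finite X" unfolding X_def using fin_edges by simp
  have bnd: "\<forall>e\<in>X. card {e'\<in>X. Rc e e'} \<le> 4" using Rc_bound unfolding X_def by blast
  have sym: "\<forall>e e'. Rc e e' \<longrightarrow> Rc e' e" unfolding Rc_def by metis
  have irr: "\<forall>e. \<not> Rc e e" unfolding Rc_def by simp
  obtain f where f: "\<forall>e\<in>X. f e \<in> {1..6::nat} \<and> (\<forall>e'\<in>X. Rc e e' \<longrightarrow> f e \<noteq> f e')"
    using greedy6[OF finX bnd sym irr] by blast
  define a where "a e = (if desig e then 1 else f e)" for e
  define x :: "'a set \<Rightarrow> nat" where "x e = 1" for e
  define lo :: "'a \<Rightarrow> int" where "lo w = 0" for w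
  have asg0: "asg 0 e \<longleftrightarrow> \<not> desig e" for e unfolding asg_def by simp
  have "Inv 0 a x lo"
    unfolding Inv_def
  proof (intro conjI)
    show "\<forall>v\<in>V. \<forall>u\<in>N v. a {v,u} \<in> {1..6} \<and> x {v,u} \<le> 2"
      using f edge_in unfolding a_def x_def X_def by auto
    show "\<forall>v\<in>V. \<forall>u\<in>N v. ord v < ord u \<and> 0 \<le> ord u \<longrightarrow> x {v,u} = 1" unfolding x_def by simp
    show "\<forall>w\<in>V. \<forall>u1\<in>N w. \<forall>u2\<in>N w. u1 \<noteq> u2 \<and> grp w u1 = grp w u2 \<and> asg 0 {w,u1} \<and> asg 0 {w,u2}
      \<longrightarrow> a {w,u1} \<noteq> a {w,u2}"
    proof (intro ballI impI)
      fix w u1 u2 assume w: "w \<in> V" and u1: "u1 \<in> N w" and u2: "u2 \<in> N w"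
        and h: "u1 \<noteq> u2 \<and> grp w u1 = grp w u2 \<and> asg 0 {w,u1} \<and> asg 0 {w,u2}"
      have X1: "{w,u1} \<in> X" "{w,u2} \<in> X" using edge_in w u1 u2 h asg0 unfolding X_def by auto
      have "{w,u1} \<noteq> {w,u2}" using h u1 u2 N_ne by (auto simp: doubleton_eq_iff)
      hence "Rc {w,u1} {w,u2}" unfolding Rc_def using w u1 u2 h by blast
      hence "f {w,u1} \<noteq> f {w,u2}" using f X1 by blast
      thus "a {w,u1} \<noteq> a {w,u2}" using h asg0 unfolding a_def by simp
    qed
  qed (simp_all)
  thus ?thesis by blast
qed

lemma reach: "k \<le> card V \<Longrightarrow> \<exists>a x lo. Inv k a x lo"
proof (induction k)
  case 0
  then show ?case using init by simp
next
  case (Suc k)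
  then obtain a x lo where I: "Inv k a x lo" by auto
  have "k \<in> ord ` V" using oimg Suc.prems by auto
  then obtain v where v: "v \<in> V" "ord v = k" by auto
  show ?case
  proof (cases "nonroot v")
    case True
    then show ?thesis using step_nonroot[OF I v] by blast
  next
    case False
    then show ?thesis using step_root[OF I v] by blast
  qed
qed

lemma a_distinct:
  fixes a1 a2 x1 x2 :: nat
  assumes "a1 \<in> {1..6}" "a2 \<in> {1..6}" "a1 \<noteq> a2"
  shows "a1 + 6 * x1 \<noteq> a2 + 6 * x2"
  using assms by auto presburger?

lemma sigma_sig: "int (sigma V E c w) = sig c w"
  unfolding sigma_def sig_def by simp

lemma final:
  assumes I: "Inv (card V) a x lo"
  shows "\<exists>c. edge_coloring V E 18 c \<and> majority V E c \<and> nsd V E c"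
proof -
  note Iu = I[unfolded Inv_def]
  have I1: "\<forall>v\<in>V. \<forall>u\<in>N v. a {v,u} \<in> {1..6} \<and> x {v,u} \<le> 2" using Iu by (rule conjunct1)
  have I2: "\<forall>v\<in>V. \<forall>u\<in>N v. ord v < ord u \<and> card V \<le> ord u \<longrightarrow> x {v,u} = 1"
    using Iu by (rule conjunct1[OF conjunct2])
  have I3: "\<forall>w\<in>V. \<forall>u1\<in>N w. \<forall>u2\<in>N w. u1 \<noteq> u2 \<and> grp w u1 = grp w u2 \<and> asg (card V) {w,u1} \<and> asg (card V) {w,u2}
      \<longrightarrow> a {w,u1} \<noteq> a {w,u2}" using Iu by (rule conjunct1[OF conjunct2[OF conjunct2]])
  have I4: "\<forall>v\<in>V. ord v < card V \<and> nonroot v \<longrightarrow> sig (cw a x) v = lo v \<or> sig (cw a x) v = lo v + 6"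
    using Iu by (rule conjunct1[OF conjunct2[OF conjunct2[OF conjunct2]]])
  have I5: "\<forall>v\<in>V. \<forall>u\<in>N v. ord v < card V \<and> ord u < card V \<and> nonroot v \<and> nonroot u \<longrightarrow>
      lo v - lo u \<noteq> -6 \<and> lo v - lo u \<noteq> 0 \<and> lo v - lo u \<noteq> 6"
    using Iu by (rule conjunct1[OF conjunct2[OF conjunct2[OF conjunct2[OF conjunct2]]]])
  have I6: "\<forall>r\<in>V. \<forall>j\<in>N r. ord r < card V \<and> \<not> nonroot r \<longrightarrow> sig (cw a x) r \<noteq> sig (cw a x) j"
    using Iu by (rule conjunct2[OF conjunct2[OF conjunct2[OF conjunct2[OF conjunct2]]]])
  define c where "c = cw a x"
  have asgall: "asg (card V) e" for e
  proof (cases "desig e")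
    case True
    then obtain w where w: "w \<in> V" "nonroot w" "e = {w, par w}" unfolding desig_def by blast
    have "ord w < card V" using oimg w(1) by auto
    thus ?thesis unfolding asg_def using w by blast
  next
    case False
    thus ?thesis unfolding asg_def by simp
  qed
  have ordlt: "ord w < card V" if "w \<in> V" for w using oimg that by auto
  have ec: "edge_coloring V E 18 c"
    unfolding edge_coloring_def
  proof
    fix e assume "e \<in> edges V E"
    then obtain u w where e: "e = {u,w}" "u \<in> V" "w \<in> V" "E u w" unfolding edges_def by auto
    hence "w \<in> N u" using N_iff by simp
    hence "a {u,w} \<in> {1..6}" "x {u,w} \<le> 2" using I1 e by auto
    thus "c e \<in> {1..18}" unfolding c_def cw_def e(1) by auto
  qed
  have mj: "majority V E c"
    unfolding majority_def
  proof (intro ballI allI)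
    fix v i assume v: "v \<in> V"
    have rb: "\<forall>u1\<in>N v. \<forall>u2\<in>N v. u1 \<noteq> u2 \<and> grp v u1 = grp v u2 \<longrightarrow> c {v,u1} \<noteq> c {v,u2}"
    proof (intro ballI impI)
      fix u1 u2 assume u1: "u1 \<in> N v" and u2: "u2 \<in> N v" and h: "u1 \<noteq> u2 \<and> grp v u1 = grp v u2"
      have "a {v,u1} \<noteq> a {v,u2}" using I3 v u1 u2 h asgall by blast
      moreover have "a {v,u1} \<in> {1..6}" "a {v,u2} \<in> {1..6}" using I1 v u1 u2 by auto
      ultimately show "c {v,u1} \<noteq> c {v,u2}" unfolding c_def cw_def using a_distinct by blast
    qed
    show "2 * card {u \<in> nbrs V E v. c {v, u} = i} \<le> deg V E v" using majority_rb[OF v rb] .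
  qed
  have ns: "nsd V E c"
    unfolding nsd_def
  proof (intro ballI impI)
    fix u w assume u: "u \<in> V" and w: "w \<in> V" and E: "E u w"
    have wu: "w \<in> N u" "u \<in> N w" using E u w N_iff sg unfolding simple_graph_def by auto
    have "sig c u \<noteq> sig c w"
    proof (cases "nonroot u")
      case nu: True
      show ?thesis
      proof (cases "nonroot w")
        case True
        have "sig c u = lo u \<or> sig c u = lo u + 6" using I4 u ordlt nu unfolding c_def by blast
        moreover have "sig c w = lo w \<or> sig c w = lo w + 6" using I4 w ordlt True unfolding c_def by blast
        moreover have "lo u - lo w \<noteq> -6 \<and> lo u - lo w \<noteq> 0 \<and> lo u - lo w \<noteq> 6" using I5 u wu ordlt w nu True by blast
        ultimately show ?thesis by auto
      next
        case False
        thus ?thesis using I6 w wu ordlt unfolding c_def by metis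
      qed
    next
      case False
      thus ?thesis using I6 u wu ordlt unfolding c_def by metis
    qed
    thus "sigma V E c u \<noteq> sigma V E c w" using sigma_sig by metis
  qed
  show ?thesis using ec mj ns by blast
qed

end

theorem mainTheorem10:
  fixes V :: "'a set" and E :: "'a \<Rightarrow> 'a \<Rightarrow> bool"
  assumes "simple_graph V E"
    and "min_degree_ge V E 2"
  shows "(\<exists>c. edge_coloring V E 18 c \<and> majority V E c \<and> nsd V E c) \<and> chi_mSigma V E \<le> 18"
proof -
  have finV: "finite V" using assms(1) unfolding simple_graph_def by simp
  obtain ord where o: "inj_on ord V" "ord ` V = {0..<card V}"
    "\<forall>v\<in>V. (\<exists>u\<in>V. E v u \<and> ord u > ord v) \<or> (\<forall>j\<in>V. E v j \<longrightarrow> (\<forall>u\<in>V. E j u \<longrightarrow> ord u \<le> ord v))"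
    using order_exists[OF finV, of E] by blast
  interpret G V E ord using assms o by unfold_locales
  obtain a x lo where "Inv (card V) a x lo" using reach by blast
  then obtain c where c: "edge_coloring V E 18 c \<and> majority V E c \<and> nsd V E c" using final by blast
  have "chi_mSigma V E \<le> 18" unfolding chi_mSigma_def by (rule Least_le) (use c in blast)
  thus ?thesis using c by blast
qed

end
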